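(* If $G$ is a Klee-graph with at least $10$ vertices that contains (at least) three triangles, then $G$ is the tricorn or a descendant of the tricorn.
   Context: For a cubic graph $G$ and $v\in V(G)$ with neighbours $x_1,x_2,x_3$, $G^v$ denotes the cubic graph obtained by replacing $v$ by a triangle: delete $v$, add new vertices $v_1,v_2,v_3$, the edges $v_1v_2,v_2v_3,v_3v_1$, and the edges $v_ix_i$ for $i=1,2,3$. A graph is a Klee-graph if it is $K_4$, or it equals $H^w$ for some Klee-graph $H$ and some $w\in V(H)$. A graph $H$ is a descendant of $G$ if $H$ can be obtained from $G$ by a (nonempty) sequence of such replacements of vertices by triangles. The tricorn is the 10-vertex graph obtained from $K_4$ by replacing three of its vertices by triangles. *)

theory Defs
  imports Main
begin

text \<open>A (finite simple) graph: a vertex set and a set of edges, each edge a 2-element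
  subset of the vertex set. Vertices are natural numbers (any finite graph is
  isomorphic to one of these).\<close>

type_synonym graph = "nat set \<times> nat set set"

definition verts :: "graph \<Rightarrow> nat set" where "verts G = fst G"
definition edges :: "graph \<Rightarrow> nat set set" where "edges G = snd G"

definition wf_graph :: "graph \<Rightarrow> bool" where
  "wf_graph G \<longleftrightarrow> finite (verts G) \<and>
     (\<forall>e\<in>edges G. e \<subseteq> verts G \<and> card e = 2)"

definition nbrs :: "graph \<Rightarrow> nat \<Rightarrow> nat set" where
  "nbrs G v = {u. {u, v} \<in> edges G}"

definition cubic :: "graph \<Rightarrow> bool" where
  "cubic G \<longleftrightarrow> wf_graph G \<and> (\<forall>v\<in>verts G. card (nbrs G v) = 3)"

definition graph_iso :: "graph \<Rightarrow> graph \<Rightarrow> bool" where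
  "graph_iso G H \<longleftrightarrow> (\<exists>f. bij_betw f (verts G) (verts H) \<and>
      edges H = (\<lambda>e. f ` e) ` edges G)"

definition is_K4 :: "graph \<Rightarrow> bool" where
  "is_K4 G \<longleftrightarrow> card (verts G) = 4 \<and> finite (verts G) \<and>
     edges G = {e. e \<subseteq> verts G \<and> card e = 2}"

text \<open>replace_by_triangle G v H: H is (a copy of) G^v, i.e. v (with neighbours
  x1,x2,x3) is deleted and replaced by a triangle on fresh vertices v1,v2,v3 with v_i x_i.\<close>
definition replace_by_triangle :: "graph \<Rightarrow> nat \<Rightarrow> graph \<Rightarrow> bool" where
  "replace_by_triangle G v H \<longleftrightarrow> cubic G \<and> v \<in> verts G \<and>
     (\<exists>x1 x2 x3 v1 v2 v3.
        nbrs G v = {x1, x2, x3} \<and> distinct [x1, x2, x3] \<and>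
        distinct [v1, v2, v3] \<and> v1 \<notin> verts G \<and> v2 \<notin> verts G \<and> v3 \<notin> verts G \<and>
        verts H = (verts G - {v}) \<union> {v1, v2, v3} \<and>
        edges H = {e \<in> edges G. v \<notin> e} \<union>
          {{v1, v2}, {v2, v3}, {v3, v1}, {v1, x1}, {v2, x2}, {v3, x3}})"

inductive klee :: "graph \<Rightarrow> bool" where
  K4: "is_K4 G \<Longrightarrow> klee G"
| step: "klee H \<Longrightarrow> w \<in> verts H \<Longrightarrow> replace_by_triangle H w G \<Longrightarrow> klee G"
| iso: "klee H \<Longrightarrow> graph_iso H G \<Longrightarrow> klee G"

inductive descendant :: "graph \<Rightarrow> graph \<Rightarrow> bool" where
  one: "v \<in> verts G \<Longrightarrow> replace_by_triangle G v H \<Longrightarrow> descendant G H"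
| more: "descendant G H \<Longrightarrow> v \<in> verts H \<Longrightarrow> replace_by_triangle H v H' \<Longrightarrow> descendant G H'"

definition is_tricorn :: "graph \<Rightarrow> bool" where
  "is_tricorn T \<longleftrightarrow> (\<exists>K K1 K2 a b c. is_K4 K \<and> a \<in> verts K \<and> b \<in> verts K \<and> c \<in> verts K \<and>
      distinct [a, b, c] \<and> replace_by_triangle K a K1 \<and> replace_by_triangle K1 b K2 \<and>
      replace_by_triangle K2 c T)"

definition triangles :: "graph \<Rightarrow> nat set set" where
  "triangles G = {T. T \<subseteq> verts G \<and> card T = 3 \<and>
      (\<forall>x\<in>T. \<forall>y\<in>T. x \<noteq> y \<longrightarrow> {x, y} \<in> edges G)}"

end

theory Submission
  imports Defs
begin

definition adj :: "graph \<Rightarrow> nat \<Rightarrow> nat \<Rightarrow> bool" where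
  "adj G a b \<longleftrightarrow> {a,b} \<in> edges G"

lemma adj_sym: "adj G a b = adj G b a"
  by (simp add: adj_def insert_commute)

lemma nbrs_adj: "nbrs G v = {u. adj G u v}"
  by (simp add: nbrs_def adj_def)

lemma wf_adj: "wf_graph G \<Longrightarrow> adj G a b \<Longrightarrow> a \<in> verts G \<and> b \<in> verts G \<and> a \<noteq> b"
proof -
  assume w: "wf_graph G" and a: "adj G a b"
  then have "{a,b} \<subseteq> verts G" "card {a,b} = 2" unfolding wf_graph_def adj_def by auto
  then show ?thesis by (cases "a = b") auto
qed

lemma edges_eqI:
  assumes "\<forall>e\<in>E1. card e = 2" "\<forall>e\<in>E2. card e = 2" "\<And>a b. {a,b} \<in> E1 \<longleftrightarrow> {a,b} \<in> E2"
  shows "E1 = E2"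
proof
  show "E1 \<subseteq> E2"
  proof
    fix e assume "e \<in> E1" then obtain a b where "e = {a,b}" using assms(1) by (meson card_2_iff)
    then show "e \<in> E2" using assms(3) \<open>e \<in> E1\<close> by auto
  qed
next
  show "E2 \<subseteq> E1"
  proof
    fix e assume "e \<in> E2" then obtain a b where "e = {a,b}" using assms(2) by (meson card_2_iff)
    then show "e \<in> E1" using assms(3) \<open>e \<in> E2\<close> by auto
  qed
qed

definition isoA :: "(nat \<Rightarrow> nat) \<Rightarrow> graph \<Rightarrow> graph \<Rightarrow> bool" where
  "isoA f A B \<longleftrightarrow> bij_betw f (verts A) (verts B) \<and>
     (\<forall>a\<in>verts A. \<forall>b\<in>verts A. adj B (f a) (f b) = adj A a b)"

lemma isoA_iso_by:
  assumes "wf_graph A" "wf_graph B" "isoA f A B"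
  shows "bij_betw f (verts A) (verts B) \<and> edges B = (\<lambda>e. f ` e) ` edges A"
proof -
  have bij: "bij_betw f (verts A) (verts B)" using assms(3) isoA_def by blast
  have ad: "\<And>a b. a\<in>verts A \<Longrightarrow> b\<in>verts A \<Longrightarrow> adj B (f a) (f b) = adj A a b" using assms(3) isoA_def by blast
  have "edges B = (\<lambda>e. f ` e) ` edges A"
  proof
    show "edges B \<subseteq> (\<lambda>e. f ` e) ` edges A"
    proof
      fix e assume e: "e \<in> edges B"
      then obtain p q where pq: "e = {p,q}" "p \<noteq> q" using assms(2) unfolding wf_graph_def by (meson card_2_iff)
      have "adj B p q" using e pq adj_def by simp
      then have "p \<in> verts B" "q \<in> verts B" using wf_adj assms(2) by auto
      moreover have "f ` verts A = verts B" using bij bij_betw_imp_surj_on by blast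
      ultimately obtain a b where ab: "a \<in> verts A" "b \<in> verts A" "f a = p" "f b = q"
        by (metis imageE)
      then have "adj A a b" using ad[of a b] \<open>adj B p q\<close> by simp
      then have "{a,b} \<in> edges A" by (simp add: adj_def)
      moreover have "e = f ` {a,b}" using ab pq by simp
      ultimately show "e \<in> (\<lambda>e. f ` e) ` edges A" by blast
    qed
  next
    show "(\<lambda>e. f ` e) ` edges A \<subseteq> edges B"
    proof
      fix e assume "e \<in> (\<lambda>e. f ` e) ` edges A"
      then obtain e0 where e0: "e0 \<in> edges A" "e = f ` e0" by auto
      then obtain a b where ab: "e0 = {a,b}" using assms(1) unfolding wf_graph_def by (meson card_2_iff)
      then have "adj A a b" using e0 adj_def by simp
      then have "a \<in> verts A" "b \<in> verts A" using wf_adj assms(1) by auto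
      then show "e \<in> edges B" using ad \<open>adj A a b\<close> e0 ab adj_def by simp
    qed
  qed
  then show ?thesis using bij by simp
qed

lemma iso_by_isoA:
  assumes "wf_graph A" "bij_betw f (verts A) (verts B)" "edges B = (\<lambda>e. f ` e) ` edges A"
  shows "isoA f A B"
  unfolding isoA_def
proof (intro conjI ballI assms(2))
  fix a b assume ab: "a \<in> verts A" "b \<in> verts A"
  have inj: "inj_on f (verts A)" using assms(2) bij_betw_imp_inj_on by blast
  show "adj B (f a) (f b) = adj A a b"
  proof
    assume "adj B (f a) (f b)"
    then have "{f a, f b} \<in> (\<lambda>e. f ` e) ` edges A" using assms(3) adj_def by metis
    then obtain e where e: "e \<in> edges A" "f ` e = {f a, f b}" by (metis imageE)
    have ev: "e \<subseteq> verts A" using e assms(1) wf_graph_def by blast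
    obtain c d where cd: "e = {c,d}" using e assms(1) unfolding wf_graph_def by (meson card_2_iff)
    have "c \<in> verts A" "d \<in> verts A" using ev cd by auto
    have "{f c, f d} = {f a, f b}" using e cd by simp
    then have "(f c = f a \<and> f d = f b) \<or> (f c = f b \<and> f d = f a)" by (simp add: doubleton_eq_iff)
    then have "(c = a \<and> d = b) \<or> (c = b \<and> d = a)"
      using inj ab \<open>c \<in> verts A\<close> \<open>d \<in> verts A\<close> by (meson inj_onD)
    then have "e = {a,b}" using cd by auto
    then show "adj A a b" using e adj_def by simp
  next
    assume "adj A a b"
    then have "{a,b} \<in> edges A" by (simp add: adj_def)
    then have "f ` {a,b} \<in> edges B" using assms(3) by blast
    then show "adj B (f a) (f b)" by (simp add: adj_def)
  qed
qed

lemma graph_iso_isoA: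
  "wf_graph A \<Longrightarrow> graph_iso A B \<Longrightarrow> \<exists>f. isoA f A B"
proof -
  assume "wf_graph A" "graph_iso A B"
  then obtain f where "bij_betw f (verts A) (verts B)" "edges B = (\<lambda>e. f ` e) ` edges A"
    unfolding graph_iso_def by blast
  then show ?thesis using iso_by_isoA \<open>wf_graph A\<close> by blast
qed

lemma isoA_graph_iso:
  "wf_graph A \<Longrightarrow> wf_graph B \<Longrightarrow> isoA f A B \<Longrightarrow> graph_iso A B"
proof -
  assume "wf_graph A" "wf_graph B" "isoA f A B"
  from isoA_iso_by[OF this] show ?thesis unfolding graph_iso_def by blast
qed

lemma isoA_id: "isoA id A A"
  by (simp add: isoA_def)

lemma isoA_trans: "isoA f A B \<Longrightarrow> isoA g B C \<Longrightarrow> isoA (g \<circ> f) A C"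
  unfolding isoA_def
proof (intro conjI ballI)
  assume f: "bij_betw f (verts A) (verts B) \<and> (\<forall>a\<in>verts A. \<forall>b\<in>verts A. adj B (f a) (f b) = adj A a b)"
    and g: "bij_betw g (verts B) (verts C) \<and> (\<forall>a\<in>verts B. \<forall>b\<in>verts B. adj C (g a) (g b) = adj B a b)"
  then show "bij_betw (g \<circ> f) (verts A) (verts C)" using bij_betw_trans by blast
  fix a b assume ab: "a \<in> verts A" "b \<in> verts A"
  then have "f a \<in> verts B" "f b \<in> verts B" using f bij_betw_apply by metis+
  then show "adj C ((g \<circ> f) a) ((g \<circ> f) b) = adj A a b" using f g ab by simp
qed

lemma isoA_sym: "isoA f A B \<Longrightarrow> isoA (inv_into (verts A) f) B A"
  unfolding isoA_def
proof (intro conjI ballI)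
  assume h: "bij_betw f (verts A) (verts B) \<and> (\<forall>a\<in>verts A. \<forall>b\<in>verts A. adj B (f a) (f b) = adj A a b)"
  then show "bij_betw (inv_into (verts A) f) (verts B) (verts A)" by (simp add: bij_betw_inv_into)
  fix a b assume ab: "a \<in> verts B" "b \<in> verts B"
  have s: "f ` verts A = verts B" using h bij_betw_imp_surj_on by blast
  have "inv_into (verts A) f a \<in> verts A" "inv_into (verts A) f b \<in> verts A"
    using ab s by (metis inv_into_into)+
  moreover have "f (inv_into (verts A) f a) = a" "f (inv_into (verts A) f b) = b"
    using ab s by (metis f_inv_into_f)+
  ultimately show "adj A (inv_into (verts A) f a) (inv_into (verts A) f b) = adj B a b"
    using h by metis
qed


definition rep_with :: "graph \<Rightarrow> nat \<Rightarrow> graph \<Rightarrow> nat \<Rightarrow> nat \<Rightarrow> nat \<Rightarrow> nat \<Rightarrow> nat \<Rightarrow> nat \<Rightarrow> bool" where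
 "rep_with G v H x1 x2 x3 v1 v2 v3 \<longleftrightarrow> cubic G \<and> v \<in> verts G \<and>
        nbrs G v = {x1, x2, x3} \<and> distinct [x1, x2, x3] \<and>
        distinct [v1, v2, v3] \<and> v1 \<notin> verts G \<and> v2 \<notin> verts G \<and> v3 \<notin> verts G \<and>
        verts H = (verts G - {v}) \<union> {v1, v2, v3} \<and>
        edges H = {e \<in> edges G. v \<notin> e} \<union>
          {{v1, v2}, {v2, v3}, {v3, v1}, {v1, x1}, {v2, x2}, {v3, x3}}"

lemma rep_iff: "replace_by_triangle G v H \<longleftrightarrow> (\<exists>x1 x2 x3 v1 v2 v3. rep_with G v H x1 x2 x3 v1 v2 v3)"
  unfolding replace_by_triangle_def rep_with_def by (rule iffI; elim exE conjE; intro exI conjI; assumption)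

lemma rep_withD:
  assumes "rep_with G v H x1 x2 x3 v1 v2 v3"
  shows "cubic G" "v \<in> verts G" "nbrs G v = {x1, x2, x3}" "distinct [x1, x2, x3]"
        "distinct [v1, v2, v3]" "v1 \<notin> verts G" "v2 \<notin> verts G" "v3 \<notin> verts G"
       "verts H = (verts G - {v}) \<union> {v1, v2, v3}"
       "edges H = {e \<in> edges G. v \<notin> e} \<union>
          {{v1, v2}, {v2, v3}, {v3, v1}, {v1, x1}, {v2, x2}, {v3, x3}}"
  using assms unfolding rep_with_def by simp_all

lemma cubic_wf: "cubic G \<Longrightarrow> wf_graph G" by (simp add: cubic_def)

lemma rep_basic:
  assumes "rep_with G v H x1 x2 x3 v1 v2 v3"
  shows "wf_graph G" "cubic G" "v \<in> verts G" "finite (verts G)"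
    "x1 \<in> verts G" "x2 \<in> verts G" "x3 \<in> verts G"
    "x1 \<noteq> v" "x2 \<noteq> v" "x3 \<noteq> v" "x1 \<noteq> x2" "x1 \<noteq> x3" "x2 \<noteq> x3"
    "v1 \<noteq> v2" "v1 \<noteq> v3" "v2 \<noteq> v3"
    "v1 \<notin> verts G" "v2 \<notin> verts G" "v3 \<notin> verts G"
    "v \<notin> verts H"
    "verts H = (verts G - {v}) \<union> {v1, v2, v3}"
    "\<And>z. adj G z v \<longleftrightarrow> z = x1 \<or> z = x2 \<or> z = x3"
proof -
  note r1 = rep_withD(1-8)[OF assms]
  note r9 = rep_withD(9)[OF assms]
  show w: "wf_graph G" using r1(1) by (rule cubic_wf)
  show "cubic G" "v \<in> verts G" "verts H = (verts G - {v}) \<union> {v1, v2, v3}" using r1 r9 by simp_all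
  show "finite (verts G)" using w unfolding wf_graph_def by simp
  show a: "\<And>z. adj G z v \<longleftrightarrow> z = x1 \<or> z = x2 \<or> z = x3"
  proof -
    fix z have "adj G z v \<longleftrightarrow> z \<in> nbrs G v" by (simp add: nbrs_adj)
    then show "adj G z v \<longleftrightarrow> z = x1 \<or> z = x2 \<or> z = x3" using r1(3) by simp
  qed
  have "adj G x1 v" "adj G x2 v" "adj G x3 v" using a by simp_all
  then have "x1 \<in> verts G \<and> v \<in> verts G \<and> x1 \<noteq> v" "x2 \<in> verts G \<and> v \<in> verts G \<and> x2 \<noteq> v"
     "x3 \<in> verts G \<and> v \<in> verts G \<and> x3 \<noteq> v"
    using wf_adj[OF w] by simp_all
  then show "x1 \<in> verts G" "x2 \<in> verts G" "x3 \<in> verts G" "x1 \<noteq> v" "x2 \<noteq> v" "x3 \<noteq> v"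
    by simp_all
  show "x1 \<noteq> x2" "x1 \<noteq> x3" "x2 \<noteq> x3" "v1 \<noteq> v2" "v1 \<noteq> v3" "v2 \<noteq> v3"
    using r1(4,5) by simp_all
  show "v1 \<notin> verts G" "v2 \<notin> verts G" "v3 \<notin> verts G" using r1 by simp_all
  show "v \<notin> verts H" unfolding r9 using r1(6-8) r1(2) by blast
qed

lemma rep_adj:
  assumes "rep_with G v H x1 x2 x3 v1 v2 v3"
  shows "adj H a b \<longleftrightarrow> (adj G a b \<and> a \<noteq> v \<and> b \<noteq> v) \<or>
     (a = v1 \<and> b = v2) \<or> (a = v2 \<and> b = v1) \<or> (a = v2 \<and> b = v3) \<or> (a = v3 \<and> b = v2) \<or>
     (a = v3 \<and> b = v1) \<or> (a = v1 \<and> b = v3) \<or> (a = v1 \<and> b = x1) \<or> (a = x1 \<and> b = v1) \<or>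
     (a = v2 \<and> b = x2) \<or> (a = x2 \<and> b = v2) \<or> (a = v3 \<and> b = x3) \<or> (a = x3 \<and> b = v3)"
proof -
  have e: "edges H = {e \<in> edges G. v \<notin> e} \<union>
          {{v1, v2}, {v2, v3}, {v3, v1}, {v1, x1}, {v2, x2}, {v3, x3}}"
    using rep_withD(10)[OF assms] .
  have "adj H a b \<longleftrightarrow> ({a,b} \<in> edges G \<and> v \<notin> {a,b}) \<or> {a,b} = {v1,v2} \<or> {a,b} = {v2,v3} \<or>
      {a,b} = {v3,v1} \<or> {a,b} = {v1,x1} \<or> {a,b} = {v2,x2} \<or> {a,b} = {v3,x3}"
    unfolding adj_def e by (simp only: Un_iff mem_Collect_eq insert_iff empty_iff) argo
  then show ?thesis unfolding adj_def doubleton_eq_iff insert_iff empty_iff by (simp add: eq_commute[of v] disj_assoc)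
qed

lemma rep_vertsH:
  assumes "rep_with G v H x1 x2 x3 v1 v2 v3"
  shows "v1 \<in> verts H" "v2 \<in> verts H" "v3 \<in> verts H" "x1 \<in> verts H" "x2 \<in> verts H" "x3 \<in> verts H"
    "\<And>y. y \<in> verts G \<Longrightarrow> y \<noteq> v \<Longrightarrow> y \<in> verts H"
    "\<And>y. y \<in> verts H \<longleftrightarrow> (y \<in> verts G \<and> y \<noteq> v) \<or> y = v1 \<or> y = v2 \<or> y = v3"
proof -
  note b = rep_basic[OF assms]
  show "\<And>y. y \<in> verts H \<longleftrightarrow> (y \<in> verts G \<and> y \<noteq> v) \<or> y = v1 \<or> y = v2 \<or> y = v3"
    unfolding b(21) by auto
  then show "v1 \<in> verts H" "v2 \<in> verts H" "v3 \<in> verts H" "x1 \<in> verts H" "x2 \<in> verts H" "x3 \<in> verts H"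
    "\<And>y. y \<in> verts G \<Longrightarrow> y \<noteq> v \<Longrightarrow> y \<in> verts H"
    using b(5-10) by simp_all
qed

lemma rep_wf:
  assumes "rep_with G v H x1 x2 x3 v1 v2 v3"
  shows "wf_graph H"
proof -
  note b = rep_basic[OF assms]
  note vh = rep_vertsH[OF assms]
  note e = rep_withD(10)[OF assms]
  have "finite (verts H)" using b(4) b(21) by simp
  moreover have "\<forall>e\<in>edges H. e \<subseteq> verts H \<and> card e = 2"
  proof
    fix e assume "e \<in> edges H"
    then have "(e \<in> edges G \<and> v \<notin> e) \<or> e = {v1,v2} \<or> e = {v2,v3} \<or> e = {v3,v1}
      \<or> e = {v1,x1} \<or> e = {v2,x2} \<or> e = {v3,x3}" unfolding e by (simp only: Un_iff mem_Collect_eq insert_iff empty_iff) argo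
    then consider "e \<in> edges G" "v \<notin> e" | "e = {v1,v2}" | "e = {v2,v3}" | "e = {v3,v1}"
      | "e = {v1,x1}" | "e = {v2,x2}" | "e = {v3,x3}" by argo
    then show "e \<subseteq> verts H \<and> card e = 2"
    proof cases
      case 1
      then have "e \<subseteq> verts G" "card e = 2" using b(1) unfolding wf_graph_def by simp_all
      then show ?thesis using 1 vh(7) by blast
    next
      case 2 then show ?thesis using vh b(14) by simp
    next
      case 3 then show ?thesis using vh b(16) by simp
    next
      case 4 then show ?thesis using vh b(15) by auto
    next
      case 5 then have "v1 \<noteq> x1" using b(5,17) by auto
      then show ?thesis using vh 5 by simp
    next
      case 6 then have "v2 \<noteq> x2" using b(6,18) by auto
      then show ?thesis using vh 6 by simp
    next
      case 7 then have "v3 \<noteq> x3" using b(7,19) by auto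
      then show ?thesis using vh 7 by simp
    qed
  qed
  ultimately show ?thesis unfolding wf_graph_def by blast
qed

lemma rep_adj_new:
  assumes "rep_with G v H x1 x2 x3 v1 v2 v3"
  shows "adj H z v1 \<longleftrightarrow> z = v2 \<or> z = v3 \<or> z = x1"
    "adj H z v2 \<longleftrightarrow> z = v1 \<or> z = v3 \<or> z = x2"
    "adj H z v3 \<longleftrightarrow> z = v1 \<or> z = v2 \<or> z = x3"
proof -
  note b = rep_basic[OF assms]
  have n: "\<not> adj G z v1" "\<not> adj G z v2" "\<not> adj G z v3" using b(1,17-19) wf_adj by blast+
  have d: "x1 \<noteq> v1" "x1 \<noteq> v2" "x1 \<noteq> v3" "x2 \<noteq> v1" "x2 \<noteq> v2" "x2 \<noteq> v3"
     "x3 \<noteq> v1" "x3 \<noteq> v2" "x3 \<noteq> v3" using b(5-7,17-19) by blast+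
  show "adj H z v1 \<longleftrightarrow> z = v2 \<or> z = v3 \<or> z = x1" "adj H z v2 \<longleftrightarrow> z = v1 \<or> z = v3 \<or> z = x2"
    "adj H z v3 \<longleftrightarrow> z = v1 \<or> z = v2 \<or> z = x3"
    unfolding rep_adj[OF assms] using n d b(14-16) by auto
qed

lemma rep_adj_old:
  assumes "rep_with G v H x1 x2 x3 v1 v2 v3" "y \<in> verts G" "y \<noteq> v"
  shows "adj H z y \<longleftrightarrow> (adj G z y \<and> z \<noteq> v) \<or> (z = v1 \<and> y = x1) \<or> (z = v2 \<and> y = x2) \<or> (z = v3 \<and> y = x3)"
proof -
  note b = rep_basic[OF assms(1)]
  have d: "y \<noteq> v1" "y \<noteq> v2" "y \<noteq> v3" using b(17-19) assms(2) by blast+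
  show ?thesis
    unfolding rep_adj[OF assms(1)] using d assms(3) by auto
qed

lemma card_nbrs3: "a \<noteq> b \<Longrightarrow> a \<noteq> c \<Longrightarrow> b \<noteq> c \<Longrightarrow> card {a,b,c} = 3" by simp

lemma rep_cubic:
  assumes "rep_with G v H x1 x2 x3 v1 v2 v3"
  shows "cubic H"
proof -
  note b = rep_basic[OF assms]
  note an = rep_adj_new[OF assms]
  note ao = rep_adj_old[OF assms]
  have wG: "wf_graph G" using b by blast
  have cG: "\<And>y. y \<in> verts G \<Longrightarrow> card (nbrs G y) = 3" using b(2) cubic_def by blast
  have nG: "\<And>y. nbrs G y \<subseteq> verts G" using wG wf_adj unfolding nbrs_adj by blast
  have fin: "\<And>y. finite (nbrs G y)" using nG b(4) finite_subset by blast
  have d: "x1 \<noteq> v1" "x1 \<noteq> v2" "x1 \<noteq> v3" "x2 \<noteq> v1" "x2 \<noteq> v2" "x2 \<noteq> v3"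
     "x3 \<noteq> v1" "x3 \<noteq> v2" "x3 \<noteq> v3" using b(5-7,17-19) by blast+
  have "\<forall>y\<in>verts H. card (nbrs H y) = 3"
  proof
    fix y assume y: "y \<in> verts H"
    then consider "y = v1" | "y = v2" | "y = v3" | "y \<in> verts G" "y \<noteq> v" using rep_vertsH(8)[OF assms] by blast
    then show "card (nbrs H y) = 3"
    proof cases
      case 1
      have "nbrs H y = {v2,v3,x1}" unfolding nbrs_adj 1 an by auto
      then show ?thesis using b(14-16) d by simp
    next
      case 2
      have "nbrs H y = {v1,v3,x2}" unfolding nbrs_adj 2 an by auto
      then show ?thesis using b(14-16) d by simp
    next
      case 3
      have "nbrs H y = {v1,v2,x3}" unfolding nbrs_adj 3 an by auto
      then show ?thesis using b(14-16) d by simp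
    next
      case 4
      note y4 = 4
      note aoy = ao[OF 4]
      consider "y = x1" | "y = x2" | "y = x3" | "y \<noteq> x1" "y \<noteq> x2" "y \<noteq> x3" by blast
      then show ?thesis
      proof cases
        case 1
        have "nbrs H y = insert v1 (nbrs G y - {v})" unfolding nbrs_adj aoy using b(8-13) 1 by auto
        moreover have "v \<in> nbrs G y" using b(22)[of y] 1 adj_sym[of G y v] unfolding nbrs_adj by simp
        moreover have "v1 \<notin> nbrs G y" using b(17-19) nG by blast
        ultimately show ?thesis using cG y4 fin by (simp add: card.insert_remove card_Diff_singleton)
      next
        case 2
        have "nbrs H y = insert v2 (nbrs G y - {v})" unfolding nbrs_adj aoy using b(8-13) 2 by auto
        moreover have "v \<in> nbrs G y" using b(22)[of y] 2 adj_sym[of G y v] unfolding nbrs_adj by simp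
        moreover have "v2 \<notin> nbrs G y" using b(17-19) nG by blast
        ultimately show ?thesis using cG y4 fin by (simp add: card.insert_remove card_Diff_singleton)
      next
        case 3
        have "nbrs H y = insert v3 (nbrs G y - {v})" unfolding nbrs_adj aoy using b(8-13) 3 by auto
        moreover have "v \<in> nbrs G y" using b(22)[of y] 3 adj_sym[of G y v] unfolding nbrs_adj by simp
        moreover have "v3 \<notin> nbrs G y" using b(17-19) nG by blast
        ultimately show ?thesis using cG y4 fin by (simp add: card.insert_remove card_Diff_singleton)
      next
        case 4
        have "\<not> adj G v y" using b(22)[of y] 4 adj_sym[of G y v] by simp
        then have "\<And>z. adj G z y \<Longrightarrow> z \<noteq> v" by blast
        then have "nbrs H y = nbrs G y" unfolding nbrs_adj aoy using 4 by auto
        then show ?thesis using cG y4 by simp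
      qed
    qed
  qed
  then show ?thesis using rep_wf[OF assms] cubic_def by blast
qed

lemma rep_card:
  assumes "rep_with G v H x1 x2 x3 v1 v2 v3"
  shows "card (verts H) = card (verts G) + 2"
proof -
  note b = rep_basic[OF assms]
  have "card (verts G - {v}) = card (verts G) - 1" using b by simp
  moreover have "card (verts G) \<ge> 1" using b card_0_eq by fastforce
  moreover have "card ((verts G - {v}) \<union> {v1,v2,v3}) = card (verts G - {v}) + card {v1,v2,v3}"
    using b by (intro card_Un_disjoint) auto
  moreover have "card {v1,v2,v3} = 3" using b by simp
  ultimately show ?thesis using b(21) by simp
qed


definition tri3 :: "graph \<Rightarrow> nat \<Rightarrow> nat \<Rightarrow> nat \<Rightarrow> bool" where
  "tri3 G a b c \<longleftrightarrow> a \<noteq> b \<and> a \<noteq> c \<and> b \<noteq> c \<and> adj G a b \<and> adj G a c \<and> adj G b c"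

lemma triangles_iff:
  assumes "wf_graph G"
  shows "T \<in> triangles G \<longleftrightarrow> (\<exists>a b c. T = {a,b,c} \<and> tri3 G a b c)"
proof
  assume "T \<in> triangles G"
  then have T: "T \<subseteq> verts G" "card T = 3" "\<forall>x\<in>T. \<forall>y\<in>T. x \<noteq> y \<longrightarrow> {x, y} \<in> edges G"
    unfolding triangles_def by simp_all
  then obtain a b c where "T = {a,b,c}" "a \<noteq> b" "b \<noteq> c" "a \<noteq> c" using card_3_iff by metis
  then show "\<exists>a b c. T = {a,b,c} \<and> tri3 G a b c" using T(3) unfolding tri3_def adj_def by auto
next
  assume "\<exists>a b c. T = {a,b,c} \<and> tri3 G a b c"
  then obtain a b c where abc: "T = {a,b,c}" "tri3 G a b c" by blast
  then have d: "a \<noteq> b" "a \<noteq> c" "b \<noteq> c" and ad: "adj G a b" "adj G a c" "adj G b c"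
    unfolding tri3_def by simp_all
  have "a \<in> verts G" "b \<in> verts G" "c \<in> verts G" using ad wf_adj assms by blast+
  then have "T \<subseteq> verts G" using abc by simp
  moreover have "card T = 3" using abc d by simp
  moreover have "\<forall>x\<in>T. \<forall>y\<in>T. x \<noteq> y \<longrightarrow> {x, y} \<in> edges G"
    using ad adj_sym[of G] unfolding abc adj_def by auto
  ultimately show "T \<in> triangles G" unfolding triangles_def by simp
qed

lemma tri3_triangle: "wf_graph G \<Longrightarrow> tri3 G a b c \<Longrightarrow> {a,b,c} \<in> triangles G"
  using triangles_iff by blast

lemma triangle_tri3: "wf_graph G \<Longrightarrow> T \<in> triangles G \<Longrightarrow> \<exists>a b c. T = {a,b,c} \<and> tri3 G a b c"
  using triangles_iff by blast

lemma tri3_verts: "wf_graph G \<Longrightarrow> tri3 G a b c \<Longrightarrow> a \<in> verts G \<and> b \<in> verts G \<and> c \<in> verts G"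
  unfolding tri3_def using wf_adj by blast

lemma rep_adj_new2:
  assumes "rep_with G v H x1 x2 x3 v1 v2 v3"
  shows "adj H v1 z \<longleftrightarrow> z = v2 \<or> z = v3 \<or> z = x1"
    "adj H v2 z \<longleftrightarrow> z = v1 \<or> z = v3 \<or> z = x2"
    "adj H v3 z \<longleftrightarrow> z = v1 \<or> z = v2 \<or> z = x3"
  using rep_adj_new[OF assms] adj_sym[of H] by metis+

lemma rep_tri_key:
  assumes "rep_with G v H x1 x2 x3 v1 v2 v3" "tri3 H a b c" "a = v1 \<or> a = v2 \<or> a = v3"
  shows "(b = v1 \<or> b = v2 \<or> b = v3) \<and> (c = v1 \<or> c = v2 \<or> c = v3)"
proof -
  note bb = rep_basic[OF assms(1)]
  have d: "x1 \<noteq> v1" "x1 \<noteq> v2" "x1 \<noteq> v3" "x2 \<noteq> v1" "x2 \<noteq> v2" "x2 \<noteq> v3"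
     "x3 \<noteq> v1" "x3 \<noteq> v2" "x3 \<noteq> v3" using bb(5-7,17-19) by blast+
  note dd = d bb(11-16) d[symmetric] bb(11-16)[symmetric]
  note an = rep_adj_new[OF assms(1)] rep_adj_new2[OF assms(1)]
  have t: "b \<noteq> c" "adj H a b" "adj H a c" "adj H b c" "a \<noteq> b" "a \<noteq> c" using assms(2) unfolding tri3_def by simp_all
  from assms(3) show ?thesis
  proof (elim disjE)
    assume a: "a = v1"
    then have "b = v2 \<or> b = v3 \<or> b = x1" "c = v2 \<or> c = v3 \<or> c = x1" using t an by simp_all
    then show ?thesis using t an dd by auto
  next
    assume a: "a = v2"
    then have "b = v1 \<or> b = v3 \<or> b = x2" "c = v1 \<or> c = v3 \<or> c = x2" using t an by simp_all
    then show ?thesis using t an dd by auto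
  next
    assume a: "a = v3"
    then have "b = v1 \<or> b = v2 \<or> b = x3" "c = v1 \<or> c = v2 \<or> c = x3" using t an by simp_all
    then show ?thesis using t an dd by auto
  qed
qed

lemma tri3_perm: "tri3 G a b c \<Longrightarrow> tri3 G b a c" "tri3 G a b c \<Longrightarrow> tri3 G c b a"
  unfolding tri3_def using adj_sym[of G] by metis+

lemma rep_old_adj:
  assumes "rep_with G v H x1 x2 x3 v1 v2 v3" "a \<in> verts G" "a \<noteq> v" "b \<in> verts G" "b \<noteq> v"
  shows "adj H a b \<longleftrightarrow> adj G a b"
proof -
  note bb = rep_basic[OF assms(1)]
  have "a \<noteq> v1" "a \<noteq> v2" "a \<noteq> v3" using assms(2) bb(17-19) by blast+
  then show ?thesis using rep_adj_old[OF assms(1) assms(4) assms(5), of a] assms(3) by simp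
qed

lemma rep_triangles:
  assumes "rep_with G v H x1 x2 x3 v1 v2 v3"
  shows "triangles H = insert {v1,v2,v3} {T \<in> triangles G. v \<notin> T}"
proof -
  note bb = rep_basic[OF assms]
  have wH: "wf_graph H" using rep_wf[OF assms] .
  have wG: "wf_graph G" using bb(1) .
  note an = rep_adj_new[OF assms] rep_adj_new2[OF assms]
  show ?thesis
  proof (intro equalityI subsetI)
    fix T assume "T \<in> triangles H"
    then obtain a b c where T: "T = {a,b,c}" "tri3 H a b c" using triangle_tri3[OF wH] by blast
    show "T \<in> insert {v1,v2,v3} {T \<in> triangles G. v \<notin> T}"
    proof (cases "a \<in> {v1,v2,v3} \<or> b \<in> {v1,v2,v3} \<or> c \<in> {v1,v2,v3}")
      case True
      have k1: "a \<in> {v1,v2,v3} \<Longrightarrow> b \<in> {v1,v2,v3} \<and> c \<in> {v1,v2,v3}"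
        using rep_tri_key[OF assms T(2)] by simp
      have k2: "b \<in> {v1,v2,v3} \<Longrightarrow> a \<in> {v1,v2,v3} \<and> c \<in> {v1,v2,v3}"
        using rep_tri_key[OF assms tri3_perm(1)[OF T(2)]] by simp
      have k3: "c \<in> {v1,v2,v3} \<Longrightarrow> b \<in> {v1,v2,v3} \<and> a \<in> {v1,v2,v3}"
        using rep_tri_key[OF assms tri3_perm(2)[OF T(2)]] by simp
      have all: "a \<in> {v1,v2,v3}" "b \<in> {v1,v2,v3}" "c \<in> {v1,v2,v3}"
        using True k1 k2 k3 by blast+
      have "T \<subseteq> {v1,v2,v3}" using all T(1) by simp
      moreover have "card T = 3" using T unfolding tri3_def by simp
      moreover have "card {v1,v2,v3} = 3" using bb(14-16) by simp
      moreover have "finite {v1,v2,v3}" by simp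
      ultimately have "T = {v1,v2,v3}" using card_subset_eq[of "{v1,v2,v3}" T] by simp
      then show ?thesis by simp
    next
      case False
      have vs: "a \<in> verts H" "b \<in> verts H" "c \<in> verts H" using tri3_verts[OF wH T(2)] by simp_all
      have old: "a \<in> verts G" "a \<noteq> v" "b \<in> verts G" "b \<noteq> v" "c \<in> verts G" "c \<noteq> v"
        using False vs rep_vertsH(8)[OF assms] by simp_all
      have "adj G a b" "adj G a c" "adj G b c"
        using T(2) rep_old_adj[OF assms] old unfolding tri3_def by simp_all
      then have "tri3 G a b c" using T(2) unfolding tri3_def by simp
      then have "T \<in> triangles G" using tri3_triangle[OF wG] T(1) by simp
      then show ?thesis using old T(1) by simp
    qed
  next
    fix T assume "T \<in> insert {v1,v2,v3} {T \<in> triangles G. v \<notin> T}"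
    then consider "T = {v1,v2,v3}" | "T \<in> triangles G" "v \<notin> T" by blast
    then show "T \<in> triangles H"
    proof cases
      case 1
      have "tri3 H v1 v2 v3" unfolding tri3_def using an bb(14-16) by simp
      then show ?thesis using 1 tri3_triangle[OF wH] by simp
    next
      case 2
      then obtain a b c where T: "T = {a,b,c}" "tri3 G a b c" using triangle_tri3[OF wG] by blast
      have old: "a \<in> verts G" "a \<noteq> v" "b \<in> verts G" "b \<noteq> v" "c \<in> verts G" "c \<noteq> v"
        using tri3_verts[OF wG T(2)] 2 T(1) by auto
      have "adj H a b" "adj H a c" "adj H b c"
        using T(2) rep_old_adj[OF assms] old unfolding tri3_def by simp_all
      then have "tri3 H a b c" using T(2) unfolding tri3_def by simp
      then show ?thesis using tri3_triangle[OF wH] T(1) by simp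
    qed
  qed
qed


lemma graph_iso_wf:
  assumes "wf_graph A" "bij_betw f (verts A) (verts B)" "edges B = (\<lambda>e. f ` e) ` edges A"
  shows "wf_graph B"
proof -
  have fin: "finite (verts B)" using assms(1,2) bij_betw_finite unfolding wf_graph_def by blast
  have inj: "inj_on f (verts A)" using assms(2) bij_betw_imp_inj_on by blast
  have im: "f ` verts A = verts B" using assms(2) bij_betw_imp_surj_on by blast
  have "\<forall>e\<in>edges B. e \<subseteq> verts B \<and> card e = 2"
  proof
    fix e assume "e \<in> edges B"
    then obtain e0 where e0: "e0 \<in> edges A" "e = f ` e0" using assms(3) by blast
    then have "e0 \<subseteq> verts A" "card e0 = 2" using assms(1) unfolding wf_graph_def by simp_all
    then have "e \<subseteq> verts B" "card e = 2" using e0(2) im inj card_image inj_on_subset by (blast, metis)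
    then show "e \<subseteq> verts B \<and> card e = 2" by simp
  qed
  then show ?thesis using fin unfolding wf_graph_def by simp
qed

lemma isoA_bij: "isoA f A B \<Longrightarrow> bij_betw f (verts A) (verts B)" unfolding isoA_def by simp
lemma isoA_adj: "isoA f A B \<Longrightarrow> a \<in> verts A \<Longrightarrow> b \<in> verts A \<Longrightarrow> adj B (f a) (f b) = adj A a b"
  unfolding isoA_def by simp
lemma isoA_in: "isoA f A B \<Longrightarrow> a \<in> verts A \<Longrightarrow> f a \<in> verts B"
  unfolding isoA_def using bij_betw_apply by metis
lemma isoA_inj: "isoA f A B \<Longrightarrow> a \<in> verts A \<Longrightarrow> b \<in> verts A \<Longrightarrow> f a = f b \<Longrightarrow> a = b"
  unfolding isoA_def using bij_betw_imp_inj_on inj_onD by metis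
lemma isoA_surj: "isoA f A B \<Longrightarrow> y \<in> verts B \<Longrightarrow> \<exists>x\<in>verts A. f x = y"
  unfolding isoA_def using bij_betw_imp_surj_on by (metis imageE)
lemma isoA_card: "isoA f A B \<Longrightarrow> card (verts B) = card (verts A)"
  unfolding isoA_def using bij_betw_same_card by metis

lemma isoA_nbrs:
  assumes "wf_graph A" "wf_graph B" "isoA f A B" "a \<in> verts A"
  shows "nbrs B (f a) = f ` nbrs A a"
proof (intro equalityI subsetI)
  fix y assume "y \<in> nbrs B (f a)"
  then have "adj B y (f a)" by (simp add: nbrs_adj)
  then have "y \<in> verts B" using wf_adj assms(2) by blast
  then obtain x where x: "x \<in> verts A" "f x = y" using isoA_surj assms(3) by blast
  then have "adj A x a" using isoA_adj[OF assms(3) x(1) assms(4)] \<open>adj B y (f a)\<close> by simp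
  then have "x \<in> nbrs A a" by (simp add: nbrs_adj)
  then show "y \<in> f ` nbrs A a" using x(2) by blast
next
  fix y assume "y \<in> f ` nbrs A a"
  then obtain x where x: "adj A x a" "y = f x" by (auto simp: nbrs_adj)
  then have "x \<in> verts A" using wf_adj assms(1) by blast
  then show "y \<in> nbrs B (f a)" using isoA_adj[OF assms(3) _ assms(4)] x by (simp add: nbrs_adj)
qed

lemma isoA_cubic:
  assumes "cubic A" "wf_graph B" "isoA f A B"
  shows "cubic B"
proof -
  have wA: "wf_graph A" using assms(1) cubic_wf by blast
  have "\<forall>y\<in>verts B. card (nbrs B y) = 3"
  proof
    fix y assume "y \<in> verts B"
    then obtain x where x: "x \<in> verts A" "f x = y" using isoA_surj assms(3) by blast
    have sub: "nbrs A x \<subseteq> verts A" using wf_adj wA unfolding nbrs_adj by blast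
    have inj: "inj_on f (nbrs A x)" using isoA_bij[OF assms(3)] bij_betw_imp_inj_on inj_on_subset sub by blast
    have "nbrs B y = f ` nbrs A x" using isoA_nbrs[OF wA assms(2,3) x(1)] x(2) by simp
    then have "card (nbrs B y) = card (nbrs A x)" using inj card_image by metis
    then show "card (nbrs B y) = 3" using assms(1) x(1) unfolding cubic_def by simp
  qed
  then show ?thesis using assms(2) unfolding cubic_def by simp
qed

lemma isoA_tri3:
  assumes "isoA f A B" "a \<in> verts A" "b \<in> verts A" "c \<in> verts A"
  shows "tri3 B (f a) (f b) (f c) \<longleftrightarrow> tri3 A a b c"
proof -
  have "f a = f b \<longleftrightarrow> a = b" "f a = f c \<longleftrightarrow> a = c" "f b = f c \<longleftrightarrow> b = c"
    using isoA_inj[OF assms(1)] assms(2-4) by blast+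
  then show ?thesis unfolding tri3_def using isoA_adj[OF assms(1)] assms(2-4) by simp
qed

lemma isoA_triangles:
  assumes "wf_graph A" "wf_graph B" "isoA f A B"
  shows "triangles B = (\<lambda>T. f ` T) ` triangles A"
proof (intro equalityI subsetI)
  fix T assume "T \<in> triangles B"
  then obtain a b c where T: "T = {a,b,c}" "tri3 B a b c" using triangle_tri3[OF assms(2)] by blast
  then have "a \<in> verts B" "b \<in> verts B" "c \<in> verts B" using tri3_verts[OF assms(2)] by simp_all
  then obtain a' b' c' where p: "a' \<in> verts A" "b' \<in> verts A" "c' \<in> verts A" "f a' = a" "f b' = b" "f c' = c"
    using isoA_surj[OF assms(3)] by metis
  then have "tri3 A a' b' c'" using isoA_tri3[OF assms(3) p(1-3)] T(2) by simp
  then have "{a',b',c'} \<in> triangles A" using tri3_triangle[OF assms(1)] by simp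
  moreover have "T = f ` {a',b',c'}" using T(1) p by simp
  ultimately show "T \<in> (\<lambda>T. f ` T) ` triangles A" by blast
next
  fix T assume "T \<in> (\<lambda>T. f ` T) ` triangles A"
  then obtain T0 where T0: "T0 \<in> triangles A" "T = f ` T0" by blast
  then obtain a b c where abc: "T0 = {a,b,c}" "tri3 A a b c" using triangle_tri3[OF assms(1)] by blast
  then have p: "a \<in> verts A" "b \<in> verts A" "c \<in> verts A" using tri3_verts[OF assms(1)] by simp_all
  then have "tri3 B (f a) (f b) (f c)" using isoA_tri3[OF assms(3) p] abc(2) by simp
  then have "{f a, f b, f c} \<in> triangles B" using tri3_triangle[OF assms(2)] by simp
  then show "T \<in> triangles B" using T0(2) abc(1) by simp
qed

lemma graph_iso_cubic:
  assumes "cubic A" "graph_iso A B"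
  shows "cubic B \<and> (\<exists>f. isoA f A B)"
proof -
  have wA: "wf_graph A" using assms(1) cubic_wf by blast
  obtain f where f: "bij_betw f (verts A) (verts B)" "edges B = (\<lambda>e. f ` e) ` edges A"
    using assms(2) unfolding graph_iso_def by blast
  have wB: "wf_graph B" using graph_iso_wf[OF wA f] .
  have i: "isoA f A B" using iso_by_isoA[OF wA f] .
  show ?thesis using isoA_cubic[OF assms(1) wB i] i by blast
qed

lemma isoA_graph_iso': "cubic A \<Longrightarrow> cubic B \<Longrightarrow> isoA f A B \<Longrightarrow> graph_iso A B"
  using isoA_graph_iso cubic_wf by blast

lemma isoA_triangles_card:
  assumes "wf_graph A" "wf_graph B" "isoA f A B"
  shows "card (triangles B) = card (triangles A)"
proof -
  have inj: "inj_on (\<lambda>T. f ` T) (triangles A)"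
  proof (rule inj_onI)
    fix S T assume S: "S \<in> triangles A" and T: "T \<in> triangles A" and e: "f ` S = f ` T"
    have "S \<subseteq> verts A" "T \<subseteq> verts A" using S T unfolding triangles_def by simp_all
    moreover have "inj_on f (verts A)" using isoA_bij[OF assms(3)] bij_betw_imp_inj_on by blast
    ultimately show "S = T" using e inj_on_image_eq_iff by metis
  qed
  show ?thesis unfolding isoA_triangles[OF assms] using card_image[OF inj] .
qed


lemma K4_adj: "is_K4 G \<Longrightarrow> adj G a b \<longleftrightarrow> a \<in> verts G \<and> b \<in> verts G \<and> a \<noteq> b"
proof -
  assume "is_K4 G"
  then have e: "edges G = {e. e \<subseteq> verts G \<and> card e = 2}" unfolding is_K4_def by simp
  have "adj G a b \<longleftrightarrow> {a,b} \<subseteq> verts G \<and> card {a,b} = 2" by (simp add: adj_def e)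
  then show ?thesis by (cases "a = b") simp_all
qed

lemma K4_wf: "is_K4 G \<Longrightarrow> wf_graph G"
  unfolding is_K4_def wf_graph_def by (elim conjE) simp

lemma K4_nbrs: "is_K4 G \<Longrightarrow> v \<in> verts G \<Longrightarrow> nbrs G v = verts G - {v}"
proof -
  assume "is_K4 G" "v \<in> verts G"
  then have "\<And>u. adj G u v \<longleftrightarrow> u \<in> verts G - {v}" using K4_adj[of G _ v] by simp
  then show ?thesis unfolding nbrs_adj by blast
qed

lemma K4_cubic: "is_K4 G \<Longrightarrow> cubic G"
proof -
  assume k: "is_K4 G"
  have "\<forall>v\<in>verts G. card (nbrs G v) = 3"
  proof
    fix v assume "v \<in> verts G"
    then have "card (nbrs G v) = card (verts G) - 1" using K4_nbrs[OF k] k unfolding is_K4_def by simp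
    then show "card (nbrs G v) = 3" using k unfolding is_K4_def by simp
  qed
  then show ?thesis unfolding cubic_def using K4_wf[OF k] by simp
qed

lemma K4_sub_tri:
  assumes "is_K4 G" "T \<subseteq> verts G" "card T = 3"
  shows "T \<in> triangles G"
proof -
  obtain a b c where T: "T = {a,b,c}" "a \<noteq> b" "b \<noteq> c" "a \<noteq> c" using assms(3) card_3_iff by metis
  have "tri3 G a b c" unfolding tri3_def using K4_adj[OF assms(1)] T assms(2) by simp
  then show ?thesis using tri3_triangle[OF K4_wf[OF assms(1)]] T(1) by simp
qed

lemma K4_vertex_tri:
  assumes "is_K4 G" "t \<in> verts G"
  shows "verts G - {t} \<in> triangles G"
proof -
  have "card (verts G - {t}) = 3" using assms unfolding is_K4_def by simp
  then show ?thesis using K4_sub_tri[OF assms(1)] by simp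
qed

lemma K4_in_tri:
  assumes "is_K4 G" "a \<in> verts G"
  shows "\<exists>T\<in>triangles G. a \<in> T"
proof -
  have "card (verts G - {a}) = 3" using assms unfolding is_K4_def by simp
  then have "verts G - {a} \<noteq> {}" by (metis card.empty zero_neq_numeral)
  then obtain t where "t \<in> verts G" "t \<noteq> a" by blast
  then have "verts G - {t} \<in> triangles G" "a \<in> verts G - {t}" using K4_vertex_tri[OF assms(1)] assms(2) by simp_all
  then show ?thesis by (rule rev_bexI)
qed

lemma K4_tri_without:
  assumes "is_K4 G" "T \<in> triangles G" "t \<in> verts G" "t \<notin> T"
  shows "T = verts G - {t}"
proof -
  have "T \<subseteq> verts G - {t}" "card T = 3" using assms(2,4) unfolding triangles_def by auto
  moreover have "card (verts G - {t}) = 3" "finite (verts G - {t})" using assms(1,3) unfolding is_K4_def by simp_all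
  ultimately show ?thesis using card_subset_eq by metis
qed

lemma isoA_K4:
  assumes "wf_graph B" "isoA f A B" "is_K4 A"
  shows "is_K4 B"
proof -
  have card: "card (verts B) = 4" using isoA_card[OF assms(2)] assms(3) unfolding is_K4_def by simp
  have fin: "finite (verts B)" using assms(1) unfolding wf_graph_def by simp
  have ad: "\<And>a b. adj B a b \<longleftrightarrow> a \<in> verts B \<and> b \<in> verts B \<and> a \<noteq> b"
  proof
    fix a b assume "adj B a b" then show "a \<in> verts B \<and> b \<in> verts B \<and> a \<noteq> b" using wf_adj assms(1) by blast
  next
    fix a b assume h: "a \<in> verts B \<and> b \<in> verts B \<and> a \<noteq> b"
    then obtain a' b' where p: "a' \<in> verts A" "b' \<in> verts A" "f a' = a" "f b' = b"
      using isoA_surj[OF assms(2)] by metis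
    then have "a' \<noteq> b'" using h by blast
    then have "adj A a' b'" using K4_adj[OF assms(3)] p by simp
    then show "adj B a b" using isoA_adj[OF assms(2) p(1,2)] p by simp
  qed
  have "edges B = {e. e \<subseteq> verts B \<and> card e = 2}"
  proof (rule edges_eqI)
    show "\<forall>e\<in>edges B. card e = 2" using assms(1) unfolding wf_graph_def by simp
    show "\<forall>e\<in>{e. e \<subseteq> verts B \<and> card e = 2}. card e = 2" by simp
    fix a b show "{a,b} \<in> edges B \<longleftrightarrow> {a,b} \<in> {e. e \<subseteq> verts B \<and> card e = 2}"
      using ad[of a b] unfolding adj_def by (cases "a = b") auto
  qed
  then show ?thesis using card fin unfolding is_K4_def by simp
qed


lemma bij_betw_new3:
  assumes "distinct [m1,m2,m3]" "distinct [w1,w2,w3]"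
    "g m1 = w1" "g m2 = w2" "g m3 = w3"
  shows "bij_betw g {m1,m2,m3} {w1,w2,w3}"
  unfolding bij_betw_def using assms by (auto simp: inj_on_def)

lemma transport:
  assumes iso: "isoA f A B" and cA: "cubic A" and cB: "cubic B" and v: "v \<in> verts A"
    and xs: "x1 \<in> verts A" "x2 \<in> verts A" "x3 \<in> verts A"
    and r: "rep_with B (f v) B2 (f x1) (f x2) (f x3) w1 w2 w3"
    and m: "distinct [m1,m2,m3]" "m1 \<notin> verts A" "m2 \<notin> verts A" "m3 \<notin> verts A"
    and A2: "A2 = (verts A - {v} \<union> {m1,m2,m3}, {e \<in> edges A. v \<notin> e} \<union> {{m1,m2},{m2,m3},{m3,m1},{m1,x1},{m2,x2},{m3,x3}})"
    and g: "g = (\<lambda>z. if z = m1 then w1 else if z = m2 then w2 else if z = m3 then w3 else f z)"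
  shows "rep_with A v A2 x1 x2 x3 m1 m2 m3 \<and> isoA g A2 B2"
proof -
  have wA: "wf_graph A" using cA cubic_wf by blast
  have wB: "wf_graph B" using cB cubic_wf by blast
  note bB = rep_basic[OF r]
  have inj: "inj_on f (verts A)" using isoA_bij[OF iso] bij_betw_imp_inj_on by blast
  have nA: "nbrs A v \<subseteq> verts A" using wf_adj wA unfolding nbrs_adj by blast
  have "f ` nbrs A v = f ` {x1,x2,x3}" using isoA_nbrs[OF wA wB iso v] rep_withD(3)[OF r] by simp
  moreover have sx: "{x1,x2,x3} \<subseteq> verts A" using xs by simp
  ultimately have nv: "nbrs A v = {x1,x2,x3}" using inj_on_image_eq_iff[OF inj nA sx] by blast
  have dx: "distinct [x1,x2,x3]" using bB(11-13) by auto
  have rA: "rep_with A v A2 x1 x2 x3 m1 m2 m3"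
    unfolding rep_with_def using cA v nv dx m unfolding A2 verts_def edges_def by simp
  note bA = rep_basic[OF rA]
  have gm: "g m1 = w1" "g m2 = w2" "g m3 = w3" using m(1) unfolding g by auto
  have gf: "\<And>z. z \<in> verts A \<Longrightarrow> g z = f z" using m unfolding g by auto
  have fv: "\<And>z. z \<in> verts A \<Longrightarrow> f z \<in> verts B" using isoA_in[OF iso] by blast
  have finj: "\<And>a b. a \<in> verts A \<Longrightarrow> b \<in> verts A \<Longrightarrow> f a = f b \<longleftrightarrow> a = b" using isoA_inj[OF iso] by blast
  have bij1: "bij_betw g (verts A - {v}) (verts B - {f v})"
  proof -
    have "bij_betw f (verts A - {v}) (verts B - {f v})"
      proof (rule bij_betw_DiffI[OF isoA_bij[OF iso]])
      show "bij_betw f {v} {f v}" by (simp add: bij_betw_def)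
    qed (use v fv in auto)
    then show ?thesis using gf by (metis (no_types, lifting) DiffD1 bij_betw_cong)
  qed
  have bij2: "bij_betw g {m1,m2,m3} {w1,w2,w3}" using bij_betw_new3[OF m(1) _ gm] bB(14-16) by simp
  have "bij_betw g (verts A - {v} \<union> {m1,m2,m3}) (verts B - {f v} \<union> {w1,w2,w3})"
    using bij_betw_combine[OF bij1 bij2] bB(17-19) by blast
  then have bij: "bij_betw g (verts A2) (verts B2)" using bA(21) bB(21) by simp
  note anA = rep_adj_new[OF rA] rep_adj_new2[OF rA]
  note anB = rep_adj_new[OF r] rep_adj_new2[OF r]
  have oldA: "\<And>z. z \<in> verts A2 \<Longrightarrow> z \<noteq> m1 \<Longrightarrow> z \<noteq> m2 \<Longrightarrow> z \<noteq> m3 \<Longrightarrow> z \<in> verts A \<and> z \<noteq> v"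
    using rep_vertsH(8)[OF rA] by blast
  have wn: "\<And>z. z \<in> verts A \<Longrightarrow> f z \<noteq> w1 \<and> f z \<noteq> w2 \<and> f z \<noteq> w3" using fv bB(17-19) by blast
  have new: "\<And>b. b \<in> verts A2 \<Longrightarrow> (adj B2 (g m1) (g b) = adj A2 m1 b) \<and> (adj B2 (g m2) (g b) = adj A2 m2 b)
     \<and> (adj B2 (g m3) (g b) = adj A2 m3 b)"
  proof -
    fix b assume b: "b \<in> verts A2"
    show "(adj B2 (g m1) (g b) = adj A2 m1 b) \<and> (adj B2 (g m2) (g b) = adj A2 m2 b)
     \<and> (adj B2 (g m3) (g b) = adj A2 m3 b)"
    proof (cases "b = m1 \<or> b = m2 \<or> b = m3")
      case True
      have dd: "m1 \<noteq> x1" "m1 \<noteq> x2" "m1 \<noteq> x3" "m2 \<noteq> x1" "m2 \<noteq> x2" "m2 \<noteq> x3"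
        "m3 \<noteq> x1" "m3 \<noteq> x2" "m3 \<noteq> x3" using m(2-4) xs by blast+
      have de: "w1 \<noteq> f x1" "w1 \<noteq> f x2" "w1 \<noteq> f x3" "w2 \<noteq> f x1" "w2 \<noteq> f x2" "w2 \<noteq> f x3"
        "w3 \<noteq> f x1" "w3 \<noteq> f x2" "w3 \<noteq> f x3" using wn xs by blast+
      have ds: "m2 \<noteq> m1" "m3 \<noteq> m1" "m3 \<noteq> m2" "w2 \<noteq> w1" "w3 \<noteq> w1" "w3 \<noteq> w2"
        using m(1) bB(14-16) by auto
      from True show ?thesis
        by (elim disjE) (simp_all add: gm anA anB bA(14-16) bB(14-16) dd de ds)
    next
      case False
      then have ob: "b \<in> verts A" "b \<noteq> v" "b \<noteq> m1" "b \<noteq> m2" "b \<noteq> m3" using oldA b by blast+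
      have gb: "g b = f b" using gf ob(1) by simp
      have "f b = f x1 \<longleftrightarrow> b = x1" "f b = f x2 \<longleftrightarrow> b = x2" "f b = f x3 \<longleftrightarrow> b = x3"
        using finj ob(1) xs by blast+
      then show ?thesis unfolding gb gm anA anB using wn[OF ob(1)] ob(3-5) by simp
    qed
  qed
  have "\<forall>a\<in>verts A2. \<forall>b\<in>verts A2. adj B2 (g a) (g b) = adj A2 a b"
  proof (intro ballI)
    fix a b assume a: "a \<in> verts A2" and b: "b \<in> verts A2"
    show "adj B2 (g a) (g b) = adj A2 a b"
    proof (cases "a = m1 \<or> a = m2 \<or> a = m3")
      case True
      then show ?thesis using new[OF b] by blast
    next
      case Fa: False
      show ?thesis
      proof (cases "b = m1 \<or> b = m2 \<or> b = m3")
        case True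
        have "adj B2 (g a) (g b) = adj B2 (g b) (g a)" by (rule adj_sym)
        also have "\<dots> = adj A2 b a" using True new[OF a] by (elim disjE) simp_all
        also have "\<dots> = adj A2 a b" by (rule adj_sym)
        finally show ?thesis .
      next
        case False
        have oa: "a \<in> verts A" "a \<noteq> v" using oldA a Fa by blast+
        have ob: "b \<in> verts A" "b \<noteq> v" using oldA b False by blast+
        have "f a \<in> verts B" "f a \<noteq> f v" "f b \<in> verts B" "f b \<noteq> f v" using fv finj oa ob v by blast+
        then have "adj B2 (f a) (f b) = adj B (f a) (f b)" using rep_old_adj[OF r, of "f a" "f b"] by simp
        also have "\<dots> = adj A a b" using isoA_adj[OF iso oa(1) ob(1)] .
        also have "\<dots> = adj A2 a b" using rep_old_adj[OF rA oa ob] by simp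
        finally show ?thesis using gf oa(1) ob(1) by simp
      qed
    qed
  qed
  then show ?thesis using rA bij unfolding isoA_def by simp
qed


lemma fresh3: "finite (S::nat set) \<Longrightarrow> \<exists>m1 m2 m3. distinct [m1,m2,m3] \<and> m1 \<notin> S \<and> m2 \<notin> S \<and> m3 \<notin> S"
proof -
  assume fin: "finite S"
  define n where "n = Suc (Max (insert 0 S))"
  have "\<And>k. k \<ge> n \<Longrightarrow> k \<notin> S"
  proof -
    fix k assume "k \<ge> n"
    then have "k > Max (insert 0 S)" unfolding n_def by simp
    then show "k \<notin> S" using Max_ge[of "insert 0 S" k] fin by auto
  qed
  then have "n \<notin> S" "Suc n \<notin> S" "Suc (Suc n) \<notin> S" by simp_all
  then show ?thesis by (intro exI[of _ n] exI[of _ "Suc n"] exI[of _ "Suc (Suc n)"]) simp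
qed

lemma rep_with_swap12: "rep_with G v H x1 x2 x3 v1 v2 v3 \<Longrightarrow> rep_with G v H x2 x1 x3 v2 v1 v3"
proof -
  assume r: "rep_with G v H x1 x2 x3 v1 v2 v3"
  have e: "{{v2, v1}, {v1, v3}, {v3, v2}, {v2, x2}, {v1, x1}, {v3, x3}} = {{v1, v2}, {v2, v3}, {v3, v1}, {v1, x1}, {v2, x2}, {v3, x3}}"
    by (simp add: insert_commute)
  show ?thesis using r unfolding rep_with_def e by (simp add: insert_commute)
qed

lemma rep_with_swap23: "rep_with G v H x1 x2 x3 v1 v2 v3 \<Longrightarrow> rep_with G v H x1 x3 x2 v1 v3 v2"
proof -
  assume r: "rep_with G v H x1 x2 x3 v1 v2 v3"
  have e: "{{v1, v3}, {v3, v2}, {v2, v1}, {v1, x1}, {v3, x3}, {v2, x2}} = {{v1, v2}, {v2, v3}, {v3, v1}, {v1, x1}, {v2, x2}, {v3, x3}}"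
    by (simp add: insert_commute)
  show ?thesis using r unfolding rep_with_def e by (simp add: insert_commute)
qed

lemma pull_with:
  assumes iso: "isoA f A B" and cA: "cubic A" and cB: "cubic B" and v: "v \<in> verts A"
    and r: "rep_with B (f v) B2 y1 y2 y3 w1 w2 w3" and X: "finite X"
  shows "\<exists>A2 g x1 x2 x3 m1 m2 m3. rep_with A v A2 x1 x2 x3 m1 m2 m3 \<and> isoA g A2 B2 \<and>
     g m1 = w1 \<and> g m2 = w2 \<and> g m3 = w3 \<and> f x1 = y1 \<and> f x2 = y2 \<and> f x3 = y3 \<and>
     (\<forall>z\<in>verts A. g z = f z) \<and> m1 \<notin> X \<and> m2 \<notin> X \<and> m3 \<notin> X"
proof -
  have wA: "wf_graph A" using cA cubic_wf by blast
  note bB = rep_basic[OF r]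
  obtain x1 where x1: "x1 \<in> verts A" "f x1 = y1" using isoA_surj[OF iso] bB(5) by blast
  obtain x2 where x2: "x2 \<in> verts A" "f x2 = y2" using isoA_surj[OF iso] bB(6) by blast
  obtain x3 where x3: "x3 \<in> verts A" "f x3 = y3" using isoA_surj[OF iso] bB(7) by blast
  have fin: "finite (verts A \<union> X)" using wA X unfolding wf_graph_def by simp
  obtain m1 m2 m3 where m: "distinct [m1,m2,m3]" "m1 \<notin> verts A \<union> X" "m2 \<notin> verts A \<union> X" "m3 \<notin> verts A \<union> X"
    using fresh3[OF fin] by blast
  define A2 where "A2 = (verts A - {v} \<union> {m1,m2,m3}, {e \<in> edges A. v \<notin> e} \<union> {{m1,m2},{m2,m3},{m3,m1},{m1,x1},{m2,x2},{m3,x3}})"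
  define g where "g = (\<lambda>z. if z = m1 then w1 else if z = m2 then w2 else if z = m3 then w3 else f z)"
  have r': "rep_with B (f v) B2 (f x1) (f x2) (f x3) w1 w2 w3" using r x1 x2 x3 by simp
  have t: "rep_with A v A2 x1 x2 x3 m1 m2 m3 \<and> isoA g A2 B2"
    using transport[OF iso cA cB v x1(1) x2(1) x3(1) r' m(1) _ _ _ A2_def g_def] m by blast
  have "g m1 = w1" "g m2 = w2" "g m3 = w3" using m(1) unfolding g_def by auto
  moreover have "\<forall>z\<in>verts A. g z = f z" using m unfolding g_def by auto
  ultimately show ?thesis using t x1 x2 x3 m by blast
qed

lemma pull:
  assumes iso: "isoA f A B" and cA: "cubic A" and cB: "cubic B" and v: "v \<in> verts A"
    and r: "replace_by_triangle B (f v) B2" and X: "finite X"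
  shows "\<exists>A2 g. replace_by_triangle A v A2 \<and> isoA g A2 B2 \<and> (\<forall>z\<in>verts A - {v}. g z = f z) \<and>
     (\<forall>z\<in>verts A2 - verts A. g z \<in> verts B2 - verts B \<and> z \<notin> X)"
proof -
  obtain y1 y2 y3 w1 w2 w3 where rw: "rep_with B (f v) B2 y1 y2 y3 w1 w2 w3" using r rep_iff by blast
  obtain A2 g x1 x2 x3 m1 m2 m3 where p: "rep_with A v A2 x1 x2 x3 m1 m2 m3" "isoA g A2 B2"
     "g m1 = w1" "g m2 = w2" "g m3 = w3" "\<forall>z\<in>verts A. g z = f z" "m1 \<notin> X" "m2 \<notin> X" "m3 \<notin> X"
    using pull_with[OF iso cA cB v rw X] by blast
  note bA = rep_basic[OF p(1)]
  note bB = rep_basic[OF rw]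
  have "\<forall>z\<in>verts A2 - verts A. g z \<in> verts B2 - verts B \<and> z \<notin> X"
  proof
    fix z assume "z \<in> verts A2 - verts A"
    then have "z = m1 \<or> z = m2 \<or> z = m3" using bA(21) by blast
    then show "g z \<in> verts B2 - verts B \<and> z \<notin> X" using p(3-5,7-9) bB(17-19) bB(21) by auto
  qed
  moreover have "replace_by_triangle A v A2" using p(1) rep_iff by blast
  ultimately show ?thesis using p(2,6) by blast
qed


lemma verts_pair[simp]: "verts (V,E) = V" by (simp add: verts_def)
lemma edges_pair[simp]: "edges (V,E) = E" by (simp add: edges_def)

lemma set_comm1:
  "\<forall>e\<in>N1. w \<notin> e \<Longrightarrow> \<forall>e\<in>N2. u \<notin> e \<Longrightarrow>
   {e \<in> {e\<in>E. u\<notin>e} \<union> N1. w \<notin> e} \<union> N2 = {e \<in> {e\<in>E. w\<notin>e} \<union> N2. u \<notin> e} \<union> N1"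
  by blast

lemma set_comm2:
  "\<forall>e\<in>N1. w \<notin> e \<Longrightarrow> \<forall>e\<in>N2. u \<notin> e \<Longrightarrow> w \<in> A \<Longrightarrow> u \<in> B \<Longrightarrow> u \<notin> C \<Longrightarrow> w \<notin> C \<Longrightarrow>
   {e \<in> {e\<in>E. u\<notin>e} \<union> insert A N1. w \<notin> e} \<union> insert C N2 = {e \<in> {e\<in>E. w\<notin>e} \<union> insert B N2. u \<notin> e} \<union> insert C N1"
  by blast

lemma commute_nonadj:
  assumes r1: "rep_with G u G1 x1 x2 x3 u1 u2 u3" and r2: "rep_with G1 w G2 y1 y2 y3 w1 w2 w3"
    and w: "w \<in> verts G" "w \<noteq> u" and wu: "w1 \<noteq> u" "w2 \<noteq> u" "w3 \<noteq> u"
    and na: "w \<noteq> x1" "w \<noteq> x2" "w \<noteq> x3"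
    and G1': "G1' = (verts G - {w} \<union> {w1,w2,w3}, {e\<in>edges G. w\<notin>e} \<union> {{w1,w2},{w2,w3},{w3,w1},{w1,y1},{w2,y2},{w3,y3}})"
  shows "rep_with G w G1' y1 y2 y3 w1 w2 w3 \<and> rep_with G1' u G2 x1 x2 x3 u1 u2 u3"
proof -
  note b1 = rep_basic[OF r1]
  note b2 = rep_basic[OF r2]
  have nuw: "\<not> adj G u w" using b1(22)[of w] na adj_sym[of G u w] by simp
  have "\<And>z. adj G1 z w \<longleftrightarrow> adj G z w"
    using rep_adj_old[OF r1 w] na nuw by auto
  then have "nbrs G w = nbrs G1 w" unfolding nbrs_adj by simp
  then have nw: "nbrs G w = {y1,y2,y3}" using rep_withD(3)[OF r2] by simp
  have yu: "y1 \<noteq> u" "y2 \<noteq> u" "y3 \<noteq> u" using nw nuw unfolding nbrs_adj by auto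
  have wG: "w1 \<notin> verts G" "w2 \<notin> verts G" "w3 \<notin> verts G" using b2(17-19) wu rep_vertsH(8)[OF r1] by blast+
  have ra: "rep_with G w G1' y1 y2 y3 w1 w2 w3"
    unfolding rep_with_def G1' verts_pair edges_pair using b1(2) w(1) nw b2(11-16) wG by simp
  note ba = rep_basic[OF ra]
  have uG1': "u \<in> verts G1'" using rep_vertsH(8)[OF ra] b1(3) w(2) by blast
  have "\<And>z. adj G1' z u \<longleftrightarrow> z = x1 \<or> z = x2 \<or> z = x3"
    using rep_adj_old[OF ra b1(3) w(2)[symmetric]] yu b1(22) na by auto
  then have nu: "nbrs G1' u = {x1,x2,x3}" unfolding nbrs_adj by auto
  have uG1: "u1 \<in> verts G1" "u2 \<in> verts G1" "u3 \<in> verts G1" using rep_vertsH[OF r1] by simp_all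
  have uW: "u1 \<notin> verts G1'" "u2 \<notin> verts G1'" "u3 \<notin> verts G1'"
    using rep_vertsH(8)[OF ra] b1(17-19) uG1 b2(17-19) by blast+
  have vG2: "verts G2 = verts G1' - {u} \<union> {u1,u2,u3}"
    unfolding b2(21) b1(21) ba(21) using wu w b1(17-19) by blast
  have N1: "\<forall>e\<in>{{u1, u2}, {u2, u3}, {u3, u1}, {u1, x1}, {u2, x2}, {u3, x3}}. w \<notin> e"
    using na w(1) b1(17-19) by auto
  have N2: "\<forall>e\<in>{{w1, w2}, {w2, w3}, {w3, w1}, {w1, y1}, {w2, y2}, {w3, y3}}. u \<notin> e"
    using wu yu by auto
  have eG2: "edges G2 = {e \<in> edges G1'. u \<notin> e} \<union> {{u1, u2}, {u2, u3}, {u3, u1}, {u1, x1}, {u2, x2}, {u3, x3}}"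
    unfolding rep_withD(10)[OF r2] rep_withD(10)[OF r1] rep_withD(10)[OF ra]
    using set_comm1[OF N1 N2] .
  have rb: "rep_with G1' u G2 x1 x2 x3 u1 u2 u3"
    unfolding rep_with_def using rep_cubic[OF ra] uG1' nu b1(11-16) uW vG2 eG2 by simp
  show ?thesis using ra rb by simp
qed

lemma commute_adj:
  assumes r1: "rep_with G u G1 w x2 x3 u1 u2 u3" and r2: "rep_with G1 w G2 u1 y2 y3 w1 w2 w3"
    and wu: "w1 \<noteq> u" "w2 \<noteq> u" "w3 \<noteq> u"
    and G1': "G1' = (verts G - {w} \<union> {w1,w2,w3}, {e\<in>edges G. w\<notin>e} \<union> {{w1,w2},{w2,w3},{w3,w1},{w1,u},{w2,y2},{w3,y3}})"
  shows "rep_with G w G1' u y2 y3 w1 w2 w3 \<and> rep_with G1' u G2 w1 x2 x3 u1 u2 u3"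
proof -
  note b1 = rep_basic[OF r1]
  note b2 = rep_basic[OF r2]
  have w: "w \<in> verts G" "w \<noteq> u" using b1(5,8) by simp_all
  have a1: "\<And>z. adj G1 z w \<longleftrightarrow> (adj G z w \<and> z \<noteq> u) \<or> z = u1"
    using rep_adj_old[OF r1 w] b1(11,12) by auto
  have a2: "\<And>z. adj G1 z w \<longleftrightarrow> z = u1 \<or> z = y2 \<or> z = y3"
    using rep_withD(3)[OF r2] unfolding nbrs_adj by blast
  have uw: "adj G u w" using b1(22)[of w] adj_sym[of G u w] by simp
  have u1G: "\<not> adj G u1 w" using wf_adj b1(1,17) by blast
  have y: "y2 \<noteq> u1" "y3 \<noteq> u1" "y2 \<noteq> y3" using b2(11-13) by simp_all
  have yG1: "y2 \<in> verts G1" "y3 \<in> verts G1" using b2(6,7) by simp_all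
  have yu: "y2 \<noteq> u" "y3 \<noteq> u" using yG1 b1(20) by blast+
  have "\<And>z. adj G z w \<longleftrightarrow> z = u \<or> z = y2 \<or> z = y3"
  proof -
    fix z
    show "adj G z w \<longleftrightarrow> z = u \<or> z = y2 \<or> z = y3"
    proof (cases "z = u")
      case True then show ?thesis using uw by simp
    next
      case False
      show ?thesis
      proof (cases "z = u1")
        case True then show ?thesis using u1G y False by simp
      next
        case F2: False
        then show ?thesis using a1[of z] a2[of z] False by simp
      qed
    qed
  qed
  then have nw: "nbrs G w = {u,y2,y3}" unfolding nbrs_adj by auto
  have wG: "w1 \<notin> verts G" "w2 \<notin> verts G" "w3 \<notin> verts G" using b2(17-19) wu rep_vertsH(8)[OF r1] by blast+
  have ra: "rep_with G w G1' u y2 y3 w1 w2 w3"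
    unfolding rep_with_def G1' verts_pair edges_pair using b1(2) w(1) nw yu y b2(14-16) wG by simp
  note ba = rep_basic[OF ra]
  have uG1': "u \<in> verts G1'" using rep_vertsH(8)[OF ra] b1(3) w(2) by blast
  have "\<And>z. adj G1' z u \<longleftrightarrow> z = w1 \<or> z = x2 \<or> z = x3"
    using rep_adj_old[OF ra b1(3) w(2)[symmetric]] yu b1(22) b1(11,12) by auto
  then have nu: "nbrs G1' u = {w1,x2,x3}" unfolding nbrs_adj by auto
  have dx: "w1 \<noteq> x2" "w1 \<noteq> x3" using wG b1(6,7) by blast+
  have uG1: "u1 \<in> verts G1" "u2 \<in> verts G1" "u3 \<in> verts G1" using rep_vertsH[OF r1] by simp_all
  have uW: "u1 \<notin> verts G1'" "u2 \<notin> verts G1'" "u3 \<notin> verts G1'"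
    using rep_vertsH(8)[OF ra] b1(17-19) uG1 b2(17-19) by blast+
  have vG2: "verts G2 = verts G1' - {u} \<union> {u1,u2,u3}"
    unfolding b2(21) b1(21) ba(21) using wu w b1(17-19) by blast
  have N1: "\<forall>e\<in>{{u1, u2}, {u2, u3}, {u3, u1}, {u2, x2}, {u3, x3}}. w \<notin> e"
    using b1(11,12) w(1) b1(17-19) by auto
  have N2: "\<forall>e\<in>{{w1, w2}, {w2, w3}, {w3, w1}, {w2, y2}, {w3, y3}}. u \<notin> e"
    using wu yu by auto
  have s1: "{{u1, u2}, {u2, u3}, {u3, u1}, {u1, w}, {u2, x2}, {u3, x3}} = insert {u1,w} {{u1, u2}, {u2, u3}, {u3, u1}, {u2, x2}, {u3, x3}}"
    by (simp add: insert_commute)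
  have s2: "{{w1, w2}, {w2, w3}, {w3, w1}, {w1, u1}, {w2, y2}, {w3, y3}} = insert {w1,u1} {{w1, w2}, {w2, w3}, {w3, w1}, {w2, y2}, {w3, y3}}"
    by (simp add: insert_commute)
  have s3: "{{w1, w2}, {w2, w3}, {w3, w1}, {w1, u}, {w2, y2}, {w3, y3}} = insert {w1,u} {{w1, w2}, {w2, w3}, {w3, w1}, {w2, y2}, {w3, y3}}"
    by (simp add: insert_commute)
  have s4: "{{u1, u2}, {u2, u3}, {u3, u1}, {u1, w1}, {u2, x2}, {u3, x3}} = insert {w1,u1} {{u1, u2}, {u2, u3}, {u3, u1}, {u2, x2}, {u3, x3}}"
    by (simp add: insert_commute)
  have cc: "u \<notin> {w1,u1}" "w \<notin> {w1,u1}" using wu b1(17) w(1) b1(3) wG by auto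
  have eG2: "edges G2 = {e \<in> edges G1'. u \<notin> e} \<union> {{u1, u2}, {u2, u3}, {u3, u1}, {u1, w1}, {u2, x2}, {u3, x3}}"
    unfolding rep_withD(10)[OF r2] rep_withD(10)[OF r1] rep_withD(10)[OF ra] s1 s2 s3 s4
    using set_comm2[OF N1 N2 _ _ cc] by simp
  have rb: "rep_with G1' u G2 w1 x2 x3 u1 u2 u3"
    unfolding rep_with_def using rep_cubic[OF ra] uG1' nu b1(13-16) dx uW vG2 eG2 by simp
  show ?thesis using ra rb by simp
qed


lemma rep_withI: "rep_with G v H x1 x2 x3 v1 v2 v3 \<Longrightarrow> replace_by_triangle G v H"
  using rep_iff by blast

lemma comm_concl:
  assumes "rep_with G w (V, E) a1 a2 a3 b1 b2 b3 \<and> rep_with (V, E) u G2 c1 c2 c3 d1 d2 d3" "V = VV"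
  shows "\<exists>G1'. replace_by_triangle G w G1' \<and> replace_by_triangle G1' u G2 \<and> verts G1' = VV"
proof (intro exI conjI)
  show "replace_by_triangle G w (V,E)" using assms(1) rep_withI by blast
  show "replace_by_triangle (V,E) u G2" using assms(1) rep_withI by blast
  show "verts (V,E) = VV" using assms(2) by simp
qed

lemma commute_adj_any:
  assumes r1: "rep_with G u G1 w x2 x3 u1 u2 u3" and r2: "rep_with G1 w G2 y1 y2 y3 w1 w2 w3"
    and wu: "w1 \<noteq> u" "w2 \<noteq> u" "w3 \<noteq> u"
  shows "\<exists>G1'. replace_by_triangle G w G1' \<and> replace_by_triangle G1' u G2 \<and> verts G1' = verts G - {w} \<union> {w1,w2,w3}"
proof -
  have "adj G1 u1 w" using rep_adj_new2(1)[OF r1, of w] by simp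
  then have "u1 \<in> nbrs G1 w" by (simp add: nbrs_adj)
  then have "u1 \<in> {y1,y2,y3}" using rep_withD(3)[OF r2] by simp
  then consider "y1 = u1" | "y2 = u1" | "y3 = u1" by blast
  then show ?thesis
  proof cases
    case 1
    have c: "rep_with G w (verts G - {w} \<union> {w1,w2,w3}, {e\<in>edges G. w\<notin>e} \<union> {{w1,w2},{w2,w3},{w3,w1},{w1,u},{w2,y2},{w3,y3}}) u y2 y3 w1 w2 w3 \<and>
       rep_with (verts G - {w} \<union> {w1,w2,w3}, {e\<in>edges G. w\<notin>e} \<union> {{w1,w2},{w2,w3},{w3,w1},{w1,u},{w2,y2},{w3,y3}}) u G2 w1 x2 x3 u1 u2 u3"
      using commute_adj[OF r1 r2[unfolded 1] wu refl] .
    show ?thesis using comm_concl[OF c] by simp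
  next
    case 2
    note r2' = rep_with_swap12[OF r2, unfolded 2]
    have c: "rep_with G w (verts G - {w} \<union> {w2,w1,w3}, {e\<in>edges G. w\<notin>e} \<union> {{w2,w1},{w1,w3},{w3,w2},{w2,u},{w1,y1},{w3,y3}}) u y1 y3 w2 w1 w3 \<and>
       rep_with (verts G - {w} \<union> {w2,w1,w3}, {e\<in>edges G. w\<notin>e} \<union> {{w2,w1},{w1,w3},{w3,w2},{w2,u},{w1,y1},{w3,y3}}) u G2 w2 x2 x3 u1 u2 u3"
      using commute_adj[OF r1 r2' wu(2,1,3) refl] .
    have "{w2,w1,w3} = {w1,w2,w3}" by (simp add: insert_commute)
    then show ?thesis using comm_concl[OF c] by simp
  next
    case 3
    note r2' = rep_with_swap12[OF rep_with_swap23[OF r2], unfolded 3]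
    have c: "rep_with G w (verts G - {w} \<union> {w3,w1,w2}, {e\<in>edges G. w\<notin>e} \<union> {{w3,w1},{w1,w2},{w2,w3},{w3,u},{w1,y1},{w2,y2}}) u y1 y2 w3 w1 w2 \<and>
       rep_with (verts G - {w} \<union> {w3,w1,w2}, {e\<in>edges G. w\<notin>e} \<union> {{w3,w1},{w1,w2},{w2,w3},{w3,u},{w1,y1},{w2,y2}}) u G2 w3 x2 x3 u1 u2 u3"
      using commute_adj[OF r1 r2' wu(3,1,2) refl] .
    have "{w3,w1,w2} = {w1,w2,w3}" by (simp add: insert_commute)
    then show ?thesis using comm_concl[OF c] by simp
  qed
qed

lemma commute_exact:
  assumes r1: "rep_with G u G1 x1 x2 x3 u1 u2 u3" and r2: "rep_with G1 w G2 y1 y2 y3 w1 w2 w3"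
    and w: "w \<in> verts G" "w \<noteq> u" and wu: "w1 \<noteq> u" "w2 \<noteq> u" "w3 \<noteq> u"
  shows "\<exists>G1'. replace_by_triangle G w G1' \<and> replace_by_triangle G1' u G2 \<and> verts G1' = verts G - {w} \<union> {w1,w2,w3}"
proof (cases "w = x1 \<or> w = x2 \<or> w = x3")
  case False
  then have na: "w \<noteq> x1" "w \<noteq> x2" "w \<noteq> x3" by simp_all
  have c: "rep_with G w (verts G - {w} \<union> {w1,w2,w3}, {e\<in>edges G. w\<notin>e} \<union> {{w1,w2},{w2,w3},{w3,w1},{w1,y1},{w2,y2},{w3,y3}}) y1 y2 y3 w1 w2 w3 \<and>
     rep_with (verts G - {w} \<union> {w1,w2,w3}, {e\<in>edges G. w\<notin>e} \<union> {{w1,w2},{w2,w3},{w3,w1},{w1,y1},{w2,y2},{w3,y3}}) u G2 x1 x2 x3 u1 u2 u3"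
    using commute_nonadj[OF r1 r2 w wu na refl] .
  then show ?thesis using comm_concl by simp
next
  case True
  then consider "w = x1" | "w = x2" | "w = x3" by blast
  then show ?thesis
  proof cases
    case 1 show ?thesis using commute_adj_any[OF r1[folded 1] r2 wu] .
  next
    case 2 show ?thesis using commute_adj_any[OF rep_with_swap12[OF r1, folded 2] r2 wu] .
  next
    case 3 show ?thesis using commute_adj_any[OF rep_with_swap12[OF rep_with_swap23[OF r1], folded 3] r2 wu] .
  qed
qed


lemma commute:
  assumes r1: "replace_by_triangle G u G1" and r2: "replace_by_triangle G1 w G2" and w: "w \<in> verts G" "w \<noteq> u"
  shows "\<exists>G1' G2' k. replace_by_triangle G w G1' \<and> replace_by_triangle G1' u G2' \<and> isoA k G2' G2 \<and>
     (\<forall>z\<in>verts G2'. z \<in> verts G1 \<longrightarrow> k z = z) \<and>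
     (\<forall>z\<in>verts G2'. z \<in> verts G1' - verts G \<longrightarrow> k z \<in> verts G2 - verts G1) \<and>
     (\<forall>z\<in>verts G2'. z \<notin> verts G1' \<longrightarrow> z \<in> verts G1 - verts G)"
proof -
  obtain x1 x2 x3 u1 u2 u3 where r1w: "rep_with G u G1 x1 x2 x3 u1 u2 u3" using r1 rep_iff by blast
  obtain y1 y2 y3 w1 w2 w3 where r2w: "rep_with G1 w G2 y1 y2 y3 w1 w2 w3" using r2 rep_iff by blast
  have c1: "cubic G1" using rep_cubic[OF r1w] .
  have c2: "cubic G2" using rep_cubic[OF r2w] .
  have wG1: "w \<in> verts G1" using rep_vertsH(8)[OF r1w] w by blast
  have r2w': "rep_with G1 (id w) G2 y1 y2 y3 w1 w2 w3" using r2w by simp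
  obtain G2' g x1' x2' x3' m1 m2 m3 where p: "rep_with G1 w G2' x1' x2' x3' m1 m2 m3" "isoA g G2' G2"
     "g m1 = w1" "g m2 = w2" "g m3 = w3" "id x1' = y1" "id x2' = y2" "id x3' = y3"
     "\<forall>z\<in>verts G1. g z = id z" "m1 \<notin> {u}" "m2 \<notin> {u}" "m3 \<notin> {u}"
    using pull_with[OF isoA_id c1 c1 wG1 r2w', of "{u}"] by blast
  have mu: "m1 \<noteq> u" "m2 \<noteq> u" "m3 \<noteq> u" using p(10-12) by simp_all
  obtain G1' where c: "replace_by_triangle G w G1'" "replace_by_triangle G1' u G2'"
      "verts G1' = verts G - {w} \<union> {m1,m2,m3}"
    using commute_exact[OF r1w p(1) w mu] by blast
  note bp = rep_basic[OF p(1)]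
  note b2 = rep_basic[OF r2w]
  note b1 = rep_basic[OF r1w]
  have P1: "\<forall>z\<in>verts G2'. z \<in> verts G1 \<longrightarrow> g z = z" using p(9) by simp
  have P2: "\<forall>z\<in>verts G2'. z \<in> verts G1' - verts G \<longrightarrow> g z \<in> verts G2 - verts G1"
  proof (intro ballI impI)
    fix z assume "z \<in> verts G2'" "z \<in> verts G1' - verts G"
    then have "z = m1 \<or> z = m2 \<or> z = m3" using c(3) by blast
    then show "g z \<in> verts G2 - verts G1" using p(3-5) b2(17-19) b2(21) by auto
  qed
  have P3: "\<forall>z\<in>verts G2'. z \<notin> verts G1' \<longrightarrow> z \<in> verts G1 - verts G"
    using bp(21) c(3) by blast
  show ?thesis using c(1,2) p(2) P1 P2 P3 by blast
qed


inductive kc :: "graph \<Rightarrow> bool" where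
  kK4: "is_K4 G \<Longrightarrow> kc G"
| kstep: "kc H \<Longrightarrow> w \<in> \<Union>(triangles H) \<Longrightarrow> replace_by_triangle H w G \<Longrightarrow> kc G"
| kiso: "kc H \<Longrightarrow> graph_iso H G \<Longrightarrow> kc G"

definition chainInv :: "graph \<Rightarrow> bool" where
  "chainInv G \<longleftrightarrow> cubic G \<and> (is_K4 G \<or> (card (verts G) \<ge> 6 \<and> card (triangles G) = 2 \<and>
     (\<forall>S\<in>triangles G. \<forall>T\<in>triangles G. S \<noteq> T \<longrightarrow> S \<inter> T = {})))"

lemma tri_sub: "T \<in> triangles G \<Longrightarrow> T \<subseteq> verts G" unfolding triangles_def by simp
lemma tri_card: "T \<in> triangles G \<Longrightarrow> card T = 3" unfolding triangles_def by simp

lemma card2_other: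
  assumes "card S = 2" "a \<in> S"
  shows "\<exists>b. S = {a,b} \<and> b \<noteq> a"
proof -
  obtain x y where "S = {x,y}" "x \<noteq> y" using assms(1) card_2_iff by metis
  then show ?thesis using assms(2) by (cases "a = x") (auto simp: insert_commute)
qed

lemma kc_inv: "kc G \<Longrightarrow> chainInv G"
proof (induction rule: kc.induct)
  case (kK4 G)
  then show ?case unfolding chainInv_def using K4_cubic by blast
next
  case (kstep H w G)
  obtain x1 x2 x3 u1 u2 u3 where r: "rep_with H w G x1 x2 x3 u1 u2 u3" using kstep.hyps(3) rep_iff by blast
  note b = rep_basic[OF r]
  have cG: "cubic G" using rep_cubic[OF r] .
  have tG: "triangles G = insert {u1,u2,u3} {T \<in> triangles H. w \<notin> T}" using rep_triangles[OF r] .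
  have cardG: "card (verts G) = card (verts H) + 2" using rep_card[OF r] .
  have Un: "\<And>A. A \<in> triangles H \<Longrightarrow> A \<noteq> {u1,u2,u3} \<and> A \<inter> {u1,u2,u3} = {}"
  proof -
    fix A assume A: "A \<in> triangles H"
    then have "A \<subseteq> verts H" "card A = 3" using tri_sub tri_card by blast+
    then have "A \<inter> {u1,u2,u3} = {}" using b(17-19) by blast
    moreover have "A \<noteq> {}" using \<open>card A = 3\<close> by auto
    ultimately show "A \<noteq> {u1,u2,u3} \<and> A \<inter> {u1,u2,u3} = {}" by auto
  qed
  obtain A where A: "{T \<in> triangles H. w \<notin> T} = {A}" "A \<in> triangles H"
  proof (cases "is_K4 H")
    case True
    have "{T \<in> triangles H. w \<notin> T} = {verts H - {w}}"
      using K4_tri_without[OF True _ b(3)] K4_vertex_tri[OF True b(3)] by blast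
    then show ?thesis using that K4_vertex_tri[OF True b(3)] by blast
  next
    case False
    then have inv: "card (triangles H) = 2" "\<forall>S\<in>triangles H. \<forall>T\<in>triangles H. S \<noteq> T \<longrightarrow> S \<inter> T = {}"
      using kstep.IH unfolding chainInv_def by blast+
    obtain T0 where T0: "T0 \<in> triangles H" "w \<in> T0" using kstep.hyps(2) by blast
    obtain A where "triangles H = {T0, A}" "A \<noteq> T0" using card2_other[OF inv(1) T0(1)] by blast
    moreover have "w \<notin> A" using inv(2) T0 calculation by blast
    ultimately have "{T \<in> triangles H. w \<notin> T} = {A}" "A \<in> triangles H" using T0(2) by auto
    then show ?thesis using that by blast
  qed
  have tG2: "triangles G = {{u1,u2,u3}, A}" using tG A(1) by simp
  have "A \<noteq> {u1,u2,u3}" using Un[OF A(2)] by blast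
  then have "card (triangles G) = 2" using tG2 by simp
  moreover have "\<forall>S\<in>triangles G. \<forall>T\<in>triangles G. S \<noteq> T \<longrightarrow> S \<inter> T = {}"
    using tG2 Un[OF A(2)] by auto
  moreover have "card (verts H) \<ge> 4" using kstep.IH unfolding chainInv_def is_K4_def by auto
  ultimately show ?case using cG cardG unfolding chainInv_def by simp
next
  case (kiso H G)
  have cH: "cubic H" using kiso.IH unfolding chainInv_def by simp
  obtain f where f: "isoA f H G" and cG: "cubic G" using graph_iso_cubic[OF cH kiso.hyps(2)] by blast
  have wH: "wf_graph H" "wf_graph G" using cH cG cubic_wf by blast+
  show ?case
  proof (cases "is_K4 H")
    case True
    then show ?thesis using isoA_K4[OF wH(2) f] cG unfolding chainInv_def by blast
  next
    case False
    then have inv: "card (verts H) \<ge> 6" "card (triangles H) = 2" "\<forall>S\<in>triangles H. \<forall>T\<in>triangles H. S \<noteq> T \<longrightarrow> S \<inter> T = {}"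
      using kiso.IH unfolding chainInv_def by blast+
    have "card (verts G) \<ge> 6" using inv(1) isoA_card[OF f] by simp
    moreover have "card (triangles G) = 2" using inv(2) isoA_triangles_card[OF wH f] by simp
    moreover have "\<forall>S\<in>triangles G. \<forall>T\<in>triangles G. S \<noteq> T \<longrightarrow> S \<inter> T = {}"
    proof (intro ballI impI)
      fix S T assume S: "S \<in> triangles G" and T: "T \<in> triangles G" and ne: "S \<noteq> T"
      obtain S0 where S0: "S0 \<in> triangles H" "S = f ` S0" using S isoA_triangles[OF wH f] by blast
      obtain T0 where T0: "T0 \<in> triangles H" "T = f ` T0" using T isoA_triangles[OF wH f] by blast
      have "S0 \<noteq> T0" using ne S0 T0 by blast
      then have "S0 \<inter> T0 = {}" using inv(3) S0 T0 by blast
      moreover have "inj_on f (verts H)" using isoA_bij[OF f] bij_betw_imp_inj_on by blast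
      moreover have "S0 \<subseteq> verts H" "T0 \<subseteq> verts H" using S0 T0 tri_sub by blast+
      ultimately have "f ` S0 \<inter> f ` T0 = {}"
        using inj_on_image_Int[of f "verts H" S0 T0] by simp
      then show "S \<inter> T = {}" using S0 T0 by simp
    qed
    ultimately show ?thesis using cG unfolding chainInv_def by simp
  qed
qed


lemma K4_swap:
  assumes k: "is_K4 H" and r: "rep_with H w C x1 x2 x3 u1 u2 u3"
  shows "\<exists>\<sigma>. isoA \<sigma> C C \<and> (\<forall>z\<in>verts C. (z \<in> verts H) = (\<sigma> z \<notin> verts H - {w}))"
proof -
  note b = rep_basic[OF r]
  have VHw: "verts H - {w} = {x1,x2,x3}" using K4_nbrs[OF k b(3)] rep_withD(3)[OF r] by simp
  have VC: "verts C = {x1,x2,x3,u1,u2,u3}" using b(21) VHw by auto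
  define \<sigma> where "\<sigma> = (\<lambda>z. if z = x1 then u1 else if z = x2 then u2 else if z = x3 then u3 else
      if z = u1 then x1 else if z = u2 then x2 else if z = u3 then x3 else z)"
  have dxu: "x1 \<noteq> u1" "x1 \<noteq> u2" "x1 \<noteq> u3" "x2 \<noteq> u1" "x2 \<noteq> u2" "x2 \<noteq> u3" "x3 \<noteq> u1" "x3 \<noteq> u2" "x3 \<noteq> u3"
    using b(5-7,17-19) by blast+
  have dux: "u1 \<noteq> x1" "u1 \<noteq> x2" "u1 \<noteq> x3" "u2 \<noteq> x1" "u2 \<noteq> x2" "u2 \<noteq> x3" "u3 \<noteq> x1" "u3 \<noteq> x2" "u3 \<noteq> x3"
    using dxu by auto
  have dx: "x1 \<noteq> x2" "x1 \<noteq> x3" "x2 \<noteq> x3" "x2 \<noteq> x1" "x3 \<noteq> x1" "x3 \<noteq> x2" using b(11-13) by auto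
  have du: "u1 \<noteq> u2" "u1 \<noteq> u3" "u2 \<noteq> u3" "u2 \<noteq> u1" "u3 \<noteq> u1" "u3 \<noteq> u2" using b(14-16) by auto
  have s: "\<sigma> x1 = u1" "\<sigma> x2 = u2" "\<sigma> x3 = u3" "\<sigma> u1 = x1" "\<sigma> u2 = x2" "\<sigma> u3 = x3"
    unfolding \<sigma>_def using dx dxu dux du by simp_all
  have xo: "x1 \<in> verts H" "x1 \<noteq> w" "x2 \<in> verts H" "x2 \<noteq> w" "x3 \<in> verts H" "x3 \<noteq> w" using b(5-10) by simp_all
  have axx: "\<And>a c. a \<in> {x1,x2,x3} \<Longrightarrow> c \<in> {x1,x2,x3} \<Longrightarrow> adj C a c \<longleftrightarrow> a \<noteq> c"
  proof -
    fix a c assume "a \<in> {x1,x2,x3}" "c \<in> {x1,x2,x3}"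
    then have "a \<in> verts H" "a \<noteq> w" "c \<in> verts H" "c \<noteq> w" using xo by auto
    then show "adj C a c \<longleftrightarrow> a \<noteq> c" using rep_old_adj[OF r] K4_adj[OF k] by simp
  qed
  note an = rep_adj_new[OF r] rep_adj_new2[OF r]
  have a: "\<And>a c. a \<in> verts C \<Longrightarrow> c \<in> verts C \<Longrightarrow> adj C (\<sigma> a) (\<sigma> c) = adj C a c"
  proof -
    fix a c assume "a \<in> verts C" "c \<in> verts C"
    then have "a \<in> {x1,x2,x3,u1,u2,u3}" "c \<in> {x1,x2,x3,u1,u2,u3}" using VC by simp_all
    then show "adj C (\<sigma> a) (\<sigma> c) = adj C a c"
      by (simp only: insert_iff empty_iff; elim disjE; simp only: s;
          simp add: axx an dx du dxu dux)
  qed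
  have ss: "\<And>z. z \<in> verts C \<Longrightarrow> \<sigma> (\<sigma> z) = z" "\<And>z. z \<in> verts C \<Longrightarrow> \<sigma> z \<in> verts C"
    using s VC by auto
  have bij: "bij_betw \<sigma> (verts C) (verts C)"
    by (rule bij_betw_byWitness[where f' = \<sigma>]) (use ss in auto)
  have "\<forall>z\<in>verts C. (z \<in> verts H) = (\<sigma> z \<notin> verts H - {w})"
  proof
    fix z assume "z \<in> verts C"
    then have "z \<in> {x1,x2,x3,u1,u2,u3}" using VC by simp
    then show "(z \<in> verts H) = (\<sigma> z \<notin> verts H - {w})"
      unfolding VHw using s xo b(17-19) dxu dux du dx by auto
  qed
  then show ?thesis using bij a unfolding isoA_def by blast
qed


lemma rep_cubic': "replace_by_triangle G v H \<Longrightarrow> cubic H"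
  using rep_iff rep_cubic by blast
lemma rep_cubic0: "replace_by_triangle G v H \<Longrightarrow> cubic G"
  unfolding replace_by_triangle_def by simp
lemma rep_v_in: "replace_by_triangle G v H \<Longrightarrow> v \<in> verts G"
  unfolding replace_by_triangle_def by simp
lemma rep_verts_old: "replace_by_triangle G v H \<Longrightarrow> verts G - {v} \<subseteq> verts H"
  using rep_iff rep_vertsH(7) by blast
lemma rep_v_notin: "replace_by_triangle G v H \<Longrightarrow> v \<notin> verts H"
  using rep_iff rep_basic(20) by blast

lemma peel:
  assumes "kc C"
  shows "card (verts C) \<ge> 6 \<Longrightarrow> T \<in> triangles C \<Longrightarrow> \<exists>E t C' f. kc E \<and> t \<in> verts E \<and>
     replace_by_triangle E t C' \<and> isoA f C' C \<and> (\<forall>x\<in>verts C'. (x \<in> verts E) = (f x \<notin> T))"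
  using assms
proof (induction arbitrary: T rule: kc.induct)
  case (kK4 G)
  then show ?case unfolding is_K4_def by simp
next
  case (kstep H w G)
  obtain x1 x2 x3 u1 u2 u3 where r: "rep_with H w G x1 x2 x3 u1 u2 u3" using kstep.hyps(3) rep_iff by blast
  note b = rep_basic[OF r]
  have tG: "triangles G = insert {u1,u2,u3} {T \<in> triangles H. w \<notin> T}" using rep_triangles[OF r] .
  have invH: "chainInv H" using kc_inv[OF kstep.hyps(1)] .
  have cH: "cubic H" using invH unfolding chainInv_def by simp
  have cG: "cubic G" using rep_cubic[OF r] .
  show ?case
  proof (cases "T = {u1,u2,u3}")
    case True
    have "\<forall>x\<in>verts G. (x \<in> verts H) = (id x \<notin> T)" using b(21) b(17-19) True by auto
    then show ?thesis using kstep.hyps(1,3) b(3) isoA_id by blast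
  next
    case False
    then have T: "T \<in> triangles H" "w \<notin> T" using kstep.prems(2) tG by blast+
    show ?thesis
    proof (cases "is_K4 H")
      case True
      have "T = verts H - {w}" using K4_tri_without[OF True T(1) b(3) T(2)] .
      then obtain \<sigma> where "isoA \<sigma> G G" "\<forall>z\<in>verts G. (z \<in> verts H) = (\<sigma> z \<notin> T)"
        using K4_swap[OF True r] by blast
      then show ?thesis using kstep.hyps(1,3) b(3) by blast
    next
      case False
      then have "card (verts H) \<ge> 6" using invH unfolding chainInv_def by simp
      then obtain E t H' f where ih: "kc E" "t \<in> verts E" "replace_by_triangle E t H'" "isoA f H' H"
          "\<forall>x\<in>verts H'. (x \<in> verts E) = (f x \<notin> T)"
        using kstep.IH T(1) by blast
      obtain y1 y2 y3 t1 t2 t3 where rE: "rep_with E t H' y1 y2 y3 t1 t2 t3" using ih(3) rep_iff by blast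
      note bE = rep_basic[OF rE]
      have cH': "cubic H'" using rep_cubic[OF rE] .
      have wH: "wf_graph H" "wf_graph H'" using cH cH' cubic_wf by blast+
      obtain w0 where w0: "w0 \<in> verts H'" "f w0 = w" using isoA_surj[OF ih(4) b(3)] by blast
      have w0E: "w0 \<in> verts E" using ih(5) w0 T(2) by blast
      have w0t: "w0 \<noteq> t" using w0(1) bE(20) by blast
      have rH: "replace_by_triangle H (f w0) G" using kstep.hyps(3) w0(2) by simp
      obtain C'' g where pl: "replace_by_triangle H' w0 C''" "isoA g C'' G" "\<forall>z\<in>verts H' - {w0}. g z = f z"
          "\<forall>z\<in>verts C'' - verts H'. g z \<in> verts G - verts H \<and> z \<notin> {}"
        using pull[OF ih(4) cH' cH w0(1) rH, of "{}"] by blast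
      obtain E1 C3 k where cm: "replace_by_triangle E w0 E1" "replace_by_triangle E1 t C3" "isoA k C3 C''"
          "\<forall>z\<in>verts C3. z \<in> verts H' \<longrightarrow> k z = z"
          "\<forall>z\<in>verts C3. z \<in> verts E1 - verts E \<longrightarrow> k z \<in> verts C'' - verts H'"
          "\<forall>z\<in>verts C3. z \<notin> verts E1 \<longrightarrow> z \<in> verts H' - verts E"
        using commute[OF ih(3) pl(1) w0E w0t] by blast
      have "w0 \<in> \<Union>(triangles E)"
      proof -
        obtain S where S: "S \<in> triangles H" "w \<in> S" using kstep.hyps(2) by blast
        then obtain S0 where S0: "S0 \<in> triangles H'" "S = f ` S0" using isoA_triangles[OF wH(2,1) ih(4)] by blast
        have "S0 \<subseteq> verts H'" using S0(1) tri_sub by blast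
        then have "w0 \<in> S0" using S(2) S0(2) w0 isoA_inj[OF ih(4)] by blast
        moreover have "S0 \<noteq> {t1,t2,t3}" using w0E bE(17-19) calculation by blast
        ultimately have "S0 \<in> triangles E" "w0 \<in> S0" using S0(1) rep_triangles[OF rE] by blast+
        then show ?thesis by blast
      qed
      then have kE1: "kc E1" using kc.kstep[OF ih(1) _ cm(1)] by blast
      have tE1: "t \<in> verts E1" using rep_verts_old[OF cm(1)] ih(2) w0t by blast
      have iso: "isoA (g \<circ> k) C3 G" using isoA_trans[OF cm(3) pl(2)] .
      have Tsub: "T \<subseteq> verts H" using T(1) tri_sub by blast
      have tC3: "t \<notin> verts C3" using rep_v_notin[OF cm(2)] .
      have w0E1: "w0 \<notin> verts E1" using rep_v_notin[OF cm(1)] .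
      have H'old: "verts E - {t} \<subseteq> verts H'" using rep_verts_old[OF ih(3)] .
      have "\<forall>x\<in>verts C3. (x \<in> verts E1) = ((g \<circ> k) x \<notin> T)"
      proof
        fix x assume x: "x \<in> verts C3"
        consider "x \<in> verts E1" "x \<in> verts E" | "x \<in> verts E1" "x \<notin> verts E" | "x \<notin> verts E1" by blast
        then show "(x \<in> verts E1) = ((g \<circ> k) x \<notin> T)"
        proof cases
          case 1
          have "x \<noteq> w0" "x \<noteq> t" using 1 w0E1 tC3 x by blast+
          then have xH': "x \<in> verts H'" using H'old 1(2) by blast
          then have "k x = x" using cm(4) x by blast
          moreover have "g x = f x" using pl(3) xH' \<open>x \<noteq> w0\<close> by blast
          moreover have "f x \<notin> T" using ih(5) xH' 1(2) by blast
          ultimately show ?thesis using 1(1) by simp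
        next
          case 2
          then have "k x \<in> verts C'' - verts H'" using cm(5) x by blast
          then have "g (k x) \<in> verts G - verts H" using pl(4) by blast
          then show ?thesis using 2(1) Tsub by auto
        next
          case 3
          then have xH': "x \<in> verts H' - verts E" using cm(6) x by blast
          then have "k x = x" using cm(4) x by blast
          moreover have "x \<noteq> w0" using xH' w0E by blast
          then have "g x = f x" using pl(3) xH' by blast
          moreover have "f x \<in> T" using ih(5) xH' by blast
          ultimately show ?thesis using 3 by simp
        qed
      qed
      then show ?thesis using kE1 tE1 cm(2) iso by blast
    qed
  qed
next
  case (kiso H G)
  have invH: "chainInv H" using kc_inv[OF kiso.hyps(1)] .
  have cH: "cubic H" using invH unfolding chainInv_def by simp
  obtain h where h: "isoA h H G" and cG: "cubic G" using graph_iso_cubic[OF cH kiso.hyps(2)] by blast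
  have wH: "wf_graph H" "wf_graph G" using cH cG cubic_wf by blast+
  have "card (verts H) \<ge> 6" using kiso.prems(1) isoA_card[OF h] by simp
  obtain T0 where T0: "T0 \<in> triangles H" "T = h ` T0" using kiso.prems(2) isoA_triangles[OF wH h] by blast
  obtain E t C' f where ih: "kc E" "t \<in> verts E" "replace_by_triangle E t C'" "isoA f C' H"
      "\<forall>x\<in>verts C'. (x \<in> verts E) = (f x \<notin> T0)"
    using kiso.IH[OF \<open>card (verts H) \<ge> 6\<close> T0(1)] by blast
  have iso: "isoA (h \<circ> f) C' G" using isoA_trans[OF ih(4) h] .
  have inj: "inj_on h (verts H)" using isoA_bij[OF h] bij_betw_imp_inj_on by blast
  have T0s: "T0 \<subseteq> verts H" using T0(1) tri_sub by blast
  have "\<forall>x\<in>verts C'. (x \<in> verts E) = ((h \<circ> f) x \<notin> T)"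
  proof
    fix x assume x: "x \<in> verts C'"
    then have fx: "f x \<in> verts H" using isoA_in[OF ih(4)] by blast
    have "(h (f x) \<in> h ` T0) = (f x \<in> T0)" using inj fx T0s inj_on_image_mem_iff by metis
    then show "(x \<in> verts E) = ((h \<circ> f) x \<notin> T)" using ih(5) x T0(2) by simp
  qed
  then show ?case using ih(1-3) iso by blast
qed


definition DD :: "graph \<Rightarrow> bool" where
 "DD G \<longleftrightarrow> (\<exists>T. is_tricorn T \<and> (graph_iso T G \<or> (\<exists>H. descendant T H \<and> graph_iso H G)))"

lemma tricorn_cubic: "is_tricorn T \<Longrightarrow> cubic T"
  unfolding is_tricorn_def using rep_cubic' by blast

lemma desc_cubic: "descendant T H \<Longrightarrow> cubic H"
  by (induction rule: descendant.induct) (use rep_cubic' in blast)+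

lemma DD_alt: "DD G \<longleftrightarrow> (\<exists>T X. is_tricorn T \<and> (X = T \<or> descendant T X) \<and> graph_iso X G)"
  unfolding DD_def by blast

lemma DD_cubic: "DD G \<Longrightarrow> cubic G"
proof -
  assume "DD G"
  then obtain T X where X: "is_tricorn T" "X = T \<or> descendant T X" "graph_iso X G" using DD_alt by blast
  have "cubic X" using X(1,2) tricorn_cubic desc_cubic by blast
  then show "cubic G" using graph_iso_cubic X(3) by blast
qed

lemma DD_isoA:
  assumes "DD G" "cubic G'" "isoA f G G'"
  shows "DD G'"
proof -
  obtain T X where X: "is_tricorn T" "X = T \<or> descendant T X" "graph_iso X G" using assms(1) DD_alt by blast
  have cX: "cubic X" using X(1,2) tricorn_cubic desc_cubic by blast
  obtain h where h: "isoA h X G" using graph_iso_cubic[OF cX X(3)] by blast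
  have "graph_iso X G'" using isoA_graph_iso'[OF cX assms(2) isoA_trans[OF h assms(3)]] .
  then show ?thesis using X(1,2) DD_alt by blast
qed

lemma DD_graph_iso: "DD H \<Longrightarrow> graph_iso H G \<Longrightarrow> DD G"
proof -
  assume a: "DD H" "graph_iso H G"
  obtain f where "isoA f H G" "cubic G" using graph_iso_cubic[OF DD_cubic[OF a(1)] a(2)] by blast
  then show "DD G" using DD_isoA a(1) by blast
qed

lemma DD_rep:
  assumes "DD G" "replace_by_triangle G w G2"
  shows "DD G2"
proof -
  obtain T X where X: "is_tricorn T" "X = T \<or> descendant T X" "graph_iso X G" using assms(1) DD_alt by blast
  have cX: "cubic X" using X(1,2) tricorn_cubic desc_cubic by blast
  obtain h where h: "isoA h X G" and cG: "cubic G" using graph_iso_cubic[OF cX X(3)] by blast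
  have "w \<in> verts G" using rep_v_in[OF assms(2)] .
  then obtain w0 where w0: "w0 \<in> verts X" "h w0 = w" using isoA_surj[OF h] by blast
  have r: "replace_by_triangle G (h w0) G2" using assms(2) w0(2) by simp
  obtain X2 g where p: "replace_by_triangle X w0 X2" "isoA g X2 G2"
    using pull[OF h cX cG w0(1) r, of "{}"] by blast
  have "descendant T X2" using X(2) p(1) w0(1) descendant.one descendant.more by blast
  moreover have "graph_iso X2 G2" using isoA_graph_iso'[OF rep_cubic'[OF p(1)] rep_cubic'[OF assms(2)] p(2)] .
  ultimately show ?thesis using X(1) DD_alt by blast
qed

lemma DD_tricorn: "is_tricorn T \<Longrightarrow> DD T"
proof -
  assume t: "is_tricorn T"
  have "graph_iso T T" using isoA_graph_iso'[OF tricorn_cubic[OF t] tricorn_cubic[OF t] isoA_id] .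
  then show "DD T" using t DD_def by blast
qed

lemma isoA_tri_mem:
  assumes "wf_graph A" "wf_graph B" "isoA f A B" "S \<in> triangles B" "x \<in> verts A" "f x \<in> S"
  shows "\<exists>S0\<in>triangles A. x \<in> S0 \<and> S = f ` S0"
proof -
  obtain S0 where S0: "S0 \<in> triangles A" "S = f ` S0" using isoA_triangles[OF assms(1-3)] assms(4) by blast
  have "S0 \<subseteq> verts A" using S0(1) tri_sub by blast
  then have "x \<in> S0" using assms(5,6) S0(2) isoA_inj[OF assms(3)] by blast
  then show ?thesis using S0 by blast
qed

lemma isoA_tri_mem2:
  assumes "wf_graph A" "wf_graph B" "isoA f A B" "S0 \<in> triangles A" "x \<in> S0"
  shows "f ` S0 \<in> triangles B \<and> f x \<in> f ` S0"
  using isoA_triangles[OF assms(1-3)] assms(4,5) by blast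


lemma star:
  "kc C \<Longrightarrow> replace_by_triangle C w G \<Longrightarrow> w \<notin> \<Union>(triangles C) \<Longrightarrow> DD G"
proof (induction "card (verts C)" arbitrary: C w G rule: less_induct)
  case less
  have invC: "chainInv C" using kc_inv[OF less.prems(1)] .
  have cC: "cubic C" using invC unfolding chainInv_def by simp
  have wC: "w \<in> verts C" using rep_v_in[OF less.prems(2)] .
  have nK: "\<not> is_K4 C" using K4_in_tri wC less.prems(3) by blast
  then have inv: "card (verts C) \<ge> 6" "card (triangles C) = 2"
    using invC unfolding chainInv_def by simp_all
  obtain T where T: "T \<in> triangles C" using inv(2) by (metis card.empty ex_in_conv zero_neq_numeral)
  obtain E t C' f where pe: "kc E" "t \<in> verts E" "replace_by_triangle E t C'" "isoA f C' C"
      "\<forall>x\<in>verts C'. (x \<in> verts E) = (f x \<notin> T)"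
    using peel[OF less.prems(1) inv(1) T] by blast
  have cC': "cubic C'" using rep_cubic'[OF pe(3)] .
  have cE: "cubic E" using rep_cubic0[OF pe(3)] .
  have wf: "wf_graph C" "wf_graph C'" "wf_graph E" using cC cC' cE cubic_wf by blast+
  obtain w' where w': "w' \<in> verts C'" "f w' = w" using isoA_surj[OF pe(4) wC] by blast
  obtain G' g where pg: "replace_by_triangle C' w' G'" "isoA g G' G"
    using pull[OF pe(4) cC' cC w'(1), of G "{}"] less.prems(2) w'(2) by blast
  have cG': "cubic G'" using rep_cubic'[OF pg(1)] .
  have cG: "cubic G" using rep_cubic'[OF less.prems(2)] .
  have suff: "DD G' \<Longrightarrow> DD G" using DD_isoA pg(2) cG by blast
  have w'tri: "w' \<notin> \<Union>(triangles C')"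
  proof
    assume "w' \<in> \<Union>(triangles C')"
    then obtain S where "S \<in> triangles C'" "w' \<in> S" by blast
    then have "f ` S \<in> triangles C" "w \<in> f ` S" using isoA_tri_mem2[OF wf(2,1) pe(4)] w'(2) by blast+
    then show False using less.prems(3) by blast
  qed
  obtain y1 y2 y3 t1 t2 t3 where rE: "rep_with E t C' y1 y2 y3 t1 t2 t3" using pe(3) rep_iff by blast
  note bE = rep_basic[OF rE]
  have tC': "triangles C' = insert {t1,t2,t3} {R \<in> triangles E. t \<notin> R}" using rep_triangles[OF rE] .
  have "w' \<notin> {t1,t2,t3}" using w'tri tC' by blast
  then have w'E: "w' \<in> verts E" "w' \<noteq> t" using w'(1) bE(21) by blast+
  have cardE: "card (verts E) < card (verts C)"
    using rep_card[OF rE] isoA_card[OF pe(4)] by simp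
  have trE: "\<And>R. R \<in> triangles E \<Longrightarrow> w' \<in> R \<Longrightarrow> t \<in> R" using w'tri tC' by blast
  show "DD G"
  proof (cases "w' \<in> \<Union>(triangles E)")
    case False
    obtain E1 G2 k where cm: "replace_by_triangle E w' E1" "replace_by_triangle E1 t G2" "isoA k G2 G'"
      using commute[OF pe(3) pg(1) w'E] by blast
    have "DD E1" using less.hyps[OF cardE pe(1) cm(1) False] .
    then have "DD G2" using DD_rep cm(2) by blast
    then show ?thesis using suff DD_isoA cm(3) cG' by blast
  next
    case True
    then obtain S where S: "S \<in> triangles E" "w' \<in> S" by blast
    have tS: "t \<in> S" using trE S by blast
    have nKE: "\<not> is_K4 E"
    proof
      assume k: "is_K4 E"
      have "verts E - {t} \<in> triangles C'" using K4_vertex_tri[OF k pe(2)] tC' by blast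
      then show False using w'tri w'E by blast
    qed
    have invE: "card (verts E) \<ge> 6" "card (triangles E) = 2"
        "\<forall>S\<in>triangles E. \<forall>T\<in>triangles E. S \<noteq> T \<longrightarrow> S \<inter> T = {}"
      using kc_inv[OF pe(1)] nKE unfolding chainInv_def by simp_all
    obtain A where A: "triangles E = {S, A}" "A \<noteq> S" using card2_other[OF invE(2) S(1)] by blast
    have SA: "S \<inter> A = {}" using invE(3) A S(1) by blast
    have Ain: "A \<in> triangles E" using A by simp
    obtain F a E'' g2 where pf: "kc F" "a \<in> verts F" "replace_by_triangle F a E''" "isoA g2 E'' E"
        "\<forall>x\<in>verts E''. (x \<in> verts F) = (g2 x \<notin> A)"
      using peel[OF pe(1) invE(1) Ain] by blast
    have cE'': "cubic E''" using rep_cubic'[OF pf(3)] .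
    have cF: "cubic F" using rep_cubic0[OF pf(3)] .
    have wf2: "wf_graph E''" "wf_graph F" using cE'' cF cubic_wf by blast+
    obtain t0 where t0: "t0 \<in> verts E''" "g2 t0 = t" using isoA_surj[OF pf(4) pe(2)] by blast
    obtain w0 where w0: "w0 \<in> verts E''" "g2 w0 = w'" using isoA_surj[OF pf(4) w'E(1)] by blast
    have t0F: "t0 \<in> verts F" using pf(5) t0 tS SA by blast
    have w0F: "w0 \<in> verts F" using pf(5) w0 S(2) SA by blast
    have tw: "t0 \<noteq> w0" using t0 w0 w'E(2) by blast
    have aE'': "a \<notin> verts E''" using rep_v_notin[OF pf(3)] .
    have ta: "t0 \<noteq> a" "w0 \<noteq> a" using t0 w0 aE'' by blast+
    obtain C2 h where p2: "replace_by_triangle E'' t0 C2" "isoA h C2 C'" "\<forall>z\<in>verts E'' - {t0}. h z = g2 z"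
      using pull[OF pf(4) cE'' cE t0(1), of C' "{}"] pe(3) t0(2) by blast
    have cC2: "cubic C2" using rep_cubic'[OF p2(1)] .
    have hw0: "h w0 = w'" using p2(3) w0 tw by simp
    have w0C2: "w0 \<in> verts C2" using rep_verts_old[OF p2(1)] w0(1) tw by blast
    obtain G2 h2 where p3: "replace_by_triangle C2 w0 G2" "isoA h2 G2 G'"
      using pull[OF p2(2) cC2 cC' w0C2, of G' "{}"] pg(1) hw0 by blast
    have cG2: "cubic G2" using rep_cubic'[OF p3(1)] .
    have suff2: "DD G2 \<Longrightarrow> DD G" using suff DD_isoA p3(2) cG' by blast
    show ?thesis
    proof (cases "is_K4 F")
      case True
      have "distinct [a, t0, w0]" using ta tw by auto
      then have "is_tricorn G2" unfolding is_tricorn_def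
        using True pf(2) t0F w0F pf(3) p2(1) p3(1)
        by (intro exI[of _ F] exI[of _ E''] exI[of _ C2] exI[of _ a] exI[of _ t0] exI[of _ w0]) simp
      then show ?thesis using suff2 DD_tricorn by blast
    next
      case False
      have invF: "\<forall>S\<in>triangles F. \<forall>T\<in>triangles F. S \<noteq> T \<longrightarrow> S \<inter> T = {}"
        using kc_inv[OF pf(1)] False unfolding chainInv_def by simp
      obtain F1 C3 k where c1: "replace_by_triangle F t0 F1" "replace_by_triangle F1 a C3" "isoA k C3 C2"
          "\<forall>z\<in>verts C3. z \<in> verts E'' \<longrightarrow> k z = z"
        using commute[OF pf(3) p2(1) t0F ta(1)] by blast
      have w0F1: "w0 \<in> verts F1" using rep_verts_old[OF c1(1)] w0F tw by blast
      have w0C3: "w0 \<in> verts C3" using rep_verts_old[OF c1(2)] w0F1 ta(2) by blast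
      have kw0: "k w0 = w0" using c1(4) w0C3 w0(1) by blast
      have cC3: "cubic C3" using rep_cubic'[OF c1(2)] .
      have p3': "replace_by_triangle C2 (k w0) G2" using p3(1) kw0 by simp
      obtain G4 k2 where p4: "replace_by_triangle C3 w0 G4" "isoA k2 G4 G2"
        using pull[OF c1(3) cC3 cC2 w0C3 p3', of "{}"] by blast
      obtain F2 G5 k3 where c2: "replace_by_triangle F1 w0 F2" "replace_by_triangle F2 a G5" "isoA k3 G5 G4"
        using commute[OF c1(2) p4(1) w0F1 ta(2)] by blast
      obtain S0 where S0: "S0 \<in> triangles E''" "t0 \<in> S0" "S = g2 ` S0"
        using isoA_tri_mem[OF wf2(1) wf(3) pf(4) S(1) t0(1)] t0(2) tS by blast
      have "S0 \<subseteq> verts E''" using S0(1) tri_sub by blast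
      then have w0S0: "w0 \<in> S0" using S(2) S0(3) w0 isoA_inj[OF pf(4)] by blast
      obtain z1 z2 z3 a1 a2 a3 where rF: "rep_with F a E'' z1 z2 z3 a1 a2 a3" using pf(3) rep_iff by blast
      have "S0 \<noteq> {a1,a2,a3}" using t0F S0(2) rep_basic(17-19)[OF rF] by blast
      then have S0F: "S0 \<in> triangles F" using S0(1) rep_triangles[OF rF] by blast
      have kF1: "kc F1" using kc.kstep[OF pf(1) _ c1(1)] S0F S0(2) by blast
      obtain q1 q2 q3 b1 b2 b3 where rF1: "rep_with F t0 F1 q1 q2 q3 b1 b2 b3" using c1(1) rep_iff by blast
      have "w0 \<notin> \<Union>(triangles F1)"
      proof
        assume "w0 \<in> \<Union>(triangles F1)"
        then obtain R where R: "R \<in> triangles F1" "w0 \<in> R" by blast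
        have "w0 \<notin> {b1,b2,b3}" using w0F rep_basic(17-19)[OF rF1] by blast
        then have "R \<in> triangles F" "t0 \<notin> R" using R rep_triangles[OF rF1] by blast+
        then show False using invF S0F w0S0 R(2) S0(2) by blast
      qed
      have cardF1: "card (verts F1) < card (verts C)"
        using rep_card[OF rF1] rep_card[OF rF] isoA_card[OF pf(4)] cardE by simp
      have "DD F2" using less.hyps[OF cardF1 kF1 c2(1) \<open>w0 \<notin> \<Union>(triangles F1)\<close>] .
      then have "DD G5" using DD_rep c2(2) by blast
      then have "DD G4" using DD_isoA c2(3) rep_cubic'[OF p4(1)] by blast
      then have "DD G2" using DD_isoA p4(2) cG2 by blast
      then show ?thesis using suff2 by blast
    qed
  qed
qed


lemma klee_Q: "klee G \<Longrightarrow> kc G \<or> DD G"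
proof (induction rule: klee.induct)
  case (K4 G)
  then show ?case using kc.kK4 by blast
next
  case (step H w G)
  show ?case
  proof (cases "DD H")
    case True
    then show ?thesis using DD_rep step.hyps(3) by blast
  next
    case False
    then have k: "kc H" using step.IH by blast
    show ?thesis
    proof (cases "w \<in> \<Union>(triangles H)")
      case True
      then show ?thesis using kc.kstep[OF k True step.hyps(3)] by blast
    next
      case False
      then show ?thesis using star[OF k step.hyps(3) False] by blast
    qed
  qed
next
  case (iso H G)
  then show ?case using kc.kiso DD_graph_iso by blast
qed

theorem mainTheorem12:
  assumes "klee G"
    and "card (verts G) \<ge> 10"
    and "card (triangles G) \<ge> 3"
  shows "\<exists>T. is_tricorn T \<and>
           (graph_iso T G \<or> (\<exists>H. descendant T H \<and> graph_iso H G))"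
proof -
  have "\<not> kc G"
  proof
    assume "kc G"
    then have "chainInv G" using kc_inv by blast
    then show False using assms(2,3) unfolding chainInv_def is_K4_def by auto
  qed
  then have "DD G" using klee_Q[OF assms(1)] by blast
  then show ?thesis unfolding DD_def .
qed

end
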